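(* Let $p$ be a prime, $n\ge 1$, and let $a_1,\ldots,a_n\in\mathbb{Q}_p$ be not all zero. Define $$m=\max\{l\in\{1,\ldots,n\} : |l a_l|\ge |j a_j| \text{ for all } j\in\{1,\ldots,n\},\ j\neq l\}.$$ Then $$\left|\int_{|x|\le 1}\chi(a_1x+a_2x^2+\dots+a_nx^n)\,dx\right|\le \frac{p^{m}}{|m a_m|^{1/m}}.$$
   Context: $|\cdot|$ denotes the $p$-adic absolute value on $\mathbb{Q}_p$ (so $|p^k u/v|=p^{-k}$ for integers $u,v$ prime to $p$, and for a positive integer $j$, $|j|$ is its $p$-adic absolute value, not its real absolute value). Every nonzero $x\in\mathbb{Q}_p$ has a unique standard expansion $x=\sum_{j=k}^\infty x_jp^j$ with $x_j\in\{0,\ldots,p-1\}$, $x_k\neq 0$, $|x|=p^{-k}$. The additive character $\chi:\mathbb{Q}_p\to\mathbb{C}$ is $\chi(x)=\exp\!\big(2\pi i\sum_{j=k}^{-1}x_jp^j\big)$ if $|x|>1$ and $\chi(x)=1$ if $|x|\le 1$. $dx$ is the Haar measure on $\mathbb{Q}_p$ normalized so that each ball $\{x:|x-x_0|\le p^r\}$ has measure $p^r$; integrals over $|x|\le 1$ are over $\{x\in\mathbb{Q}_p:|x|\le 1\}$. *)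

theory Defs
  imports "HOL-Analysis.Analysis" "HOL-Computational_Algebra.Primes"
begin

text \<open>p-adic numbers represented by their standard digit expansions
  x = sum_j x_j p^j, stored as a digit function int => nat.\<close>

type_synonym padic = "int \<Rightarrow> nat"

definition Qp :: "nat \<Rightarrow> padic set" where
  "Qp p = {d. (\<forall>j. d j < p) \<and> (\<exists>k. \<forall>j<k. d j = 0)}"

definition pabs :: "nat \<Rightarrow> padic \<Rightarrow> real" where
  "pabs p d = (if d = (\<lambda>_. 0) then 0
               else real p powi (- (LEAST j. d j \<noteq> 0)))"

definition ptrunc :: "nat \<Rightarrow> int \<Rightarrow> padic \<Rightarrow> real" where
  "ptrunc p N d = (\<Sum>j\<in>{j. j < N \<and> d j \<noteq> 0}. real (d j) * real p powi j)"

text \<open>The j-th p-adic digit of a number in Z[1/p] (given as a real).\<close>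
definition pdigit :: "nat \<Rightarrow> int \<Rightarrow> real \<Rightarrow> nat" where
  "pdigit p j q = nat (\<lfloor>q / real p powi j\<rfloor> mod int p)"

definition padd :: "nat \<Rightarrow> padic \<Rightarrow> padic \<Rightarrow> padic" where
  "padd p x y = (\<lambda>j. THE c. \<forall>\<^sub>F M in sequentially.
      pdigit p j (ptrunc p (int M) x + ptrunc p (int M) y) = c)"

definition pmul :: "nat \<Rightarrow> padic \<Rightarrow> padic \<Rightarrow> padic" where
  "pmul p x y = (\<lambda>j. THE c. \<forall>\<^sub>F M in sequentially.
      pdigit p j (ptrunc p (int M) x * ptrunc p (int M) y) = c)"

definition pof_nat :: "nat \<Rightarrow> nat \<Rightarrow> padic" where
  "pof_nat p r = (\<lambda>j. if j < 0 then 0 else (r div p ^ nat j) mod p)"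

fun ppow :: "nat \<Rightarrow> padic \<Rightarrow> nat \<Rightarrow> padic" where
  "ppow p x 0 = pof_nat p 1"
| "ppow p x (Suc k) = pmul p (ppow p x k) x"

fun peval :: "nat \<Rightarrow> (nat \<Rightarrow> padic) \<Rightarrow> nat \<Rightarrow> padic \<Rightarrow> padic" where
  "peval p a 0 x = (\<lambda>_. 0)"
| "peval p a (Suc k) x = padd p (peval p a k x) (pmul p (a (Suc k)) (ppow p x (Suc k)))"

definition pchi :: "nat \<Rightarrow> padic \<Rightarrow> complex" where
  "pchi p d = cis (2 * pi * (\<Sum>j\<in>{j. j < 0 \<and> d j \<noteq> 0}. real (d j) * real p powi j))"

text \<open>Haar integral over Z_p = {|x| <= 1} (of a continuous function), as the limit
  of Riemann sums over the balls r + p^N Z_p, r = 0..p^N-1, each of measure p^(-N).\<close>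
definition pint :: "nat \<Rightarrow> (padic \<Rightarrow> complex) \<Rightarrow> complex" where
  "pint p g = lim (\<lambda>N. (\<Sum>r<p ^ N. g (pof_nat p r)) / of_nat (p ^ N))"

end

theory Submission
  imports Defs
begin

definition ev0 :: "(nat \<Rightarrow> int) \<Rightarrow> nat \<Rightarrow> int \<Rightarrow> int" where
  "ev0 c n x = (\<Sum>j\<le>n. c j * x ^ j)"

definition tay :: "(nat \<Rightarrow> int) \<Rightarrow> nat \<Rightarrow> int \<Rightarrow> nat \<Rightarrow> int" where
  "tay c n y i = (\<Sum>j\<in>{i..n}. c j * int (j choose i) * y ^ (j - i))"

lemma taylor: "ev0 c n (y + u) = (\<Sum>i\<le>n. tay c n y i * u ^ i)"
proof -
  have "ev0 c n (y + u) = (\<Sum>j\<le>n. \<Sum>i\<le>j. c j * int (j choose i) * y ^ (j - i) * u ^ i)"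
    unfolding ev0_def
    by (rule sum.cong[OF refl]) (simp add: binomial_ring[of u y] sum_distrib_left mult_ac add.commute)
  also have "\<dots> = (\<Sum>i\<le>n. \<Sum>j\<in>{i..n}. c j * int (j choose i) * y ^ (j - i) * u ^ i)"
  proof -
    have "(\<Sum>j\<le>n. \<Sum>i\<le>j. c j * int (j choose i) * y ^ (j - i) * u ^ i)
        = (\<Sum>j\<le>n. \<Sum>i\<in>{i. i \<le> n \<and> i \<le> j}. c j * int (j choose i) * y ^ (j - i) * u ^ i)"
      by (rule sum.cong[OF refl]) (rule sum.cong, auto)
    also have "\<dots> = (\<Sum>i\<le>n. \<Sum>j\<in>{j. j \<le> n \<and> i \<le> j}. c j * int (j choose i) * y ^ (j - i) * u ^ i)"
      using sum.swap_restrict[of "{..n}" "{..n}" "\<lambda>j i. c j * int (j choose i) * y ^ (j - i) * u ^ i" "\<lambda>j i. i \<le> j"]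
      by simp
    also have "\<dots> = (\<Sum>i\<le>n. \<Sum>j\<in>{i..n}. c j * int (j choose i) * y ^ (j - i) * u ^ i)"
      by (rule sum.cong[OF refl]) (rule sum.cong, auto)
    finally show ?thesis .
  qed
  finally show ?thesis unfolding tay_def by (simp add: sum_distrib_right)
qed

lemma lt_aux: "a < p \<Longrightarrow> b < q \<Longrightarrow> a + p * b < p * (q::nat)"
proof -
  assume "a < p" "b < q"
  have "a + p * b < p + p * b" using `a < p` by simp
  also have "\<dots> = p * Suc b" by simp
  also have "\<dots> \<le> p * q" using `b < q` by (intro mult_le_mono2) simp
  finally show ?thesis .
qed

lemma lt_aux2: "a < p \<Longrightarrow> b < q \<Longrightarrow> a + b * p < p * (q::nat)"
  using lt_aux[of a p b q] by (simp add: mult.commute)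

lemma sum_split_mod:
  fixes f :: "nat \<Rightarrow> 'a::comm_monoid_add"
  assumes "p > 0"
  shows "(\<Sum>x<p*q. f x) = (\<Sum>y<p. \<Sum>u<q. f (y + p*u))"
proof -
  have "(\<Sum>y<p. \<Sum>u<q. f (y + p*u)) = (\<Sum>z\<in>{..<p}\<times>{..<q}. f (fst z + p * snd z))"
    by (simp add: sum.cartesian_product split_def)
  also have "\<dots> = (\<Sum>x<p*q. f x)"
    by (rule sum.reindex_bij_witness[where i="\<lambda>x. (x mod p, x div p)" and j="\<lambda>z. fst z + p * snd z"])
       (use assms in \<open>auto simp: less_mult_imp_div_less lt_aux2 mult.commute\<close>)
  finally show ?thesis by simp
qed

lemma divx:
  fixes p :: nat and X :: int
  assumes "prime p" "i > 0" "int p ^ a dvd int i * X"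
  shows "int p ^ a dvd int p ^ (i - 1) * X"
  using assms(2,3)
proof (induction i arbitrary: a rule: less_induct)
  case (less i)
  show ?case
  proof (cases "p dvd i")
    case False
    then have "coprime (int p ^ a) (int i)"
      using assms(1) by (simp add: prime_imp_coprime coprime_power_left_iff)
    then have "int p ^ a dvd X" using less.prems(2) coprime_dvd_mult_right_iff by blast
    then show ?thesis by simp
  next
    case True
    then obtain i' where i': "i = p * i'" by blast
    have pp: "p > 1" using assms(1) prime_gt_1_nat by blast
    have "i' > 0" using i' less.prems(1) by (cases "i' = 0") auto
    have "i' < i" using i' pp `i' > 0` by simp
    show ?thesis
    proof (cases a)
      case 0 then show ?thesis by simp
    next
      case (Suc b)
      have "int p * int p ^ b dvd int p * (int i' * X)"
        using less.prems(2) Suc i' by (simp add: mult_ac)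
      then have "int p ^ b dvd int i' * X" using pp by simp
      from less.IH[OF `i' < i` `i' > 0` this]
      have "int p ^ b dvd int p ^ (i' - 1) * X" .
      then have "int p ^ a dvd int p ^ i' * X"
        using Suc `i' > 0` by (cases i') (auto simp: mult_ac)
      moreover have "int p ^ i' dvd int p ^ (i - 1)"
        using `i' < i` by (simp add: le_imp_power_dvd)
      ultimately show ?thesis by (meson dvd_trans mult_dvd_mono dvd_refl)
    qed
  qed
qed


definition ee :: "nat \<Rightarrow> nat \<Rightarrow> int \<Rightarrow> complex" where
  "ee p k z = cis (2 * pi * real_of_int z / real p ^ k)"

definition Ssum :: "nat \<Rightarrow> nat \<Rightarrow> (nat \<Rightarrow> int) \<Rightarrow> nat \<Rightarrow> complex" where
  "Ssum p k A n = (\<Sum>x<p^k. ee p k (ev0 A n (int x)))"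

lemma ee_add: "ee p k (a + b) = ee p k a * ee p k b"
  unfolding ee_def by (simp add: cis_mult add_divide_distrib distrib_left)

lemma ee_mult: "p > 0 \<Longrightarrow> ee p k (int p ^ k * w) = 1"
proof -
  assume "p > 0"
  have "2 * pi * real_of_int (int p ^ k * w) / real p ^ k = 2 * pi * real_of_int w"
    using `p > 0` by (simp add: field_simps)
  then show ?thesis unfolding ee_def by simp
qed

lemma ee_Suc: "p > 0 \<Longrightarrow> ee p (Suc k) (int p * z) = ee p k z"
proof -
  assume "p > 0"
  have "2 * pi * real_of_int (int p * z) / real p ^ Suc k = 2 * pi * real_of_int z / real p ^ k"
    using `p > 0` by (simp add: field_simps)
  then show ?thesis unfolding ee_def by simp
qed

lemma norm_ee[simp]: "norm (ee p k z) = 1"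
  unfolding ee_def by simp

lemma Ssum_triv: "norm (Ssum p k A n) \<le> real p ^ k"
proof -
  have "norm (Ssum p k A n) \<le> (\<Sum>x<p^k. norm (ee p k (ev0 A n (int x))))"
    unfolding Ssum_def by (rule norm_sum)
  also have "\<dots> = real p ^ k" by simp
  finally show ?thesis .
qed

definition Bc :: "nat \<Rightarrow> (nat \<Rightarrow> int) \<Rightarrow> nat \<Rightarrow> int \<Rightarrow> nat \<Rightarrow> int" where
  "Bc p A n y i = (if i = 0 then 0 else int p ^ (i - 1) * tay A n y i)"

lemma tay0: "tay c n y 0 = ev0 c n y"
  unfolding tay_def ev0_def by (simp add: atLeast0AtMost)

lemma shift_eq: "ev0 A n (y + int p * u) = ev0 A n y + int p * ev0 (Bc p A n y) n u"
proof -
  have "ev0 A n (y + int p * u) = (\<Sum>i\<le>n. tay A n y i * (int p * u) ^ i)"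
    by (rule taylor)
  also have "\<dots> = tay A n y 0 + (\<Sum>i<n. tay A n y (Suc i) * (int p * u) ^ Suc i)"
    by (subst sum.atMost_shift) simp
  also have "(\<Sum>i<n. tay A n y (Suc i) * (int p * u) ^ Suc i)
      = int p * (\<Sum>i<n. Bc p A n y (Suc i) * u ^ Suc i)"
    unfolding Bc_def by (simp add: sum_distrib_left power_mult_distrib mult_ac)
  also have "(\<Sum>i<n. Bc p A n y (Suc i) * u ^ Suc i) = ev0 (Bc p A n y) n u"
    unfolding ev0_def by (subst sum.atMost_shift) (simp add: Bc_def)
  finally show ?thesis by (simp add: tay0)
qed

lemma Ssum_rec:
  assumes "p > 0"
  shows "Ssum p (Suc k) A n = (\<Sum>y<p. ee p (Suc k) (ev0 A n (int y)) * Ssum p k (Bc p A n (int y)) n)"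
proof -
  have "Ssum p (Suc k) A n = (\<Sum>y<p. \<Sum>u<p^k. ee p (Suc k) (ev0 A n (int (y + p * u))))"
    unfolding Ssum_def by (simp add: sum_split_mod[OF assms])
  also have "\<dots> = (\<Sum>y<p. ee p (Suc k) (ev0 A n (int y)) * Ssum p k (Bc p A n (int y)) n)"
    unfolding Ssum_def sum_distrib_left
    by (intro sum.cong refl) (simp add: shift_eq ee_add ee_Suc assms)
  finally show ?thesis .
qed

definition Dd :: "(nat \<Rightarrow> int) \<Rightarrow> nat \<Rightarrow> int \<Rightarrow> nat \<Rightarrow> int" where
  "Dd A n y i = (\<Sum>j\<in>{Suc i..n}. (int j * A j) * int ((j - 1) choose i) * y ^ (j - Suc i))"

lemma tay_Dd: "int (Suc i) * tay A n y (Suc i) = Dd A n y i"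
  unfolding tay_def Dd_def sum_distrib_left
proof (intro sum.cong refl)
  fix j assume "j \<in> {Suc i..n}"
  then obtain j0 where j0: "j = Suc j0" by (cases j) auto
  have "Suc i * (Suc j0 choose Suc i) = Suc j0 * (j0 choose i)"
    using Suc_times_binomial_eq[of j0 i] by (simp add: mult_ac)
  then have "int (Suc i) * int (Suc j0 choose Suc i) = int (Suc j0) * int (j0 choose i)"
    by (metis of_nat_mult)
  then show "int (Suc i) * (A j * int (j choose Suc i) * y ^ (j - Suc i)) =
        int j * A j * int ((j - 1) choose i) * y ^ (j - Suc i)"
    using j0 by (simp add: mult_ac)
qed

definition Ader :: "(nat \<Rightarrow> int) \<Rightarrow> nat \<Rightarrow> int" where
  "Ader A j = int (Suc j) * A (Suc j)"

lemma Dd_tay: "n \<ge> 1 \<Longrightarrow> Dd A n y i = tay (Ader A) (n - 1) y i"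
proof -
  assume "n \<ge> 1"
  then obtain n0 where n0: "n = Suc n0" by (cases n) auto
  show ?thesis
    unfolding Dd_def tay_def n0 Ader_def
    by (subst sum.shift_bounds_cl_Suc_ivl) simp
qed

lemma Dd_taylor:
  assumes "n \<ge> 1"
  shows "Dd A n z 0 = (\<Sum>i\<le>n-1. Dd A n y i * (z - y) ^ i)"
proof -
  have "Dd A n z 0 = ev0 (Ader A) (n-1) (y + (z - y))"
    using assms by (simp add: Dd_tay tay0)
  also have "\<dots> = (\<Sum>i\<le>n-1. Dd A n y i * (z - y) ^ i)"
    using assms taylor[of "Ader A" "n-1" y "z-y"] by (simp add: Dd_tay)
  finally show ?thesis .
qed

lemma Bc_Dd: "i \<ge> 1 \<Longrightarrow> int i * Bc p A n y i = int p ^ (i - 1) * Dd A n y (i - 1)"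
proof -
  assume "i \<ge> 1"
  then obtain i0 where "i = Suc i0" by (cases i) auto
  then show ?thesis unfolding Bc_def using tay_Dd[of i0 A n y]
    by (simp add: mult_ac)
qed


definition Hyp :: "nat \<Rightarrow> (nat \<Rightarrow> int) \<Rightarrow> nat \<Rightarrow> nat \<Rightarrow> nat \<Rightarrow> bool" where
  "Hyp p A n m t \<longleftrightarrow> 1 \<le> m \<and> m \<le> n \<and> (\<forall>j\<in>{1..n}. int p ^ t dvd int j * A j)
     \<and> \<not> int p ^ (t+1) dvd int m * A m \<and> (\<forall>j\<in>{m<..n}. int p ^ (t+1) dvd int j * A j)"

lemma Dd_a: "Hyp p A n m t \<Longrightarrow> int p ^ t dvd Dd A n y i"
  unfolding Hyp_def Dd_def
  by (intro dvd_sum) (auto intro!: dvd_mult2)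

lemma Dd_c: "Hyp p A n m t \<Longrightarrow> i \<ge> m \<Longrightarrow> int p ^ (t+1) dvd Dd A n y i"
  unfolding Hyp_def Dd_def
  by (intro dvd_sum) (auto intro!: dvd_mult2)

lemma Dd_b: assumes "Hyp p A n m t" shows "\<not> int p ^ (t+1) dvd Dd A n y (m - 1)"
proof
  assume H: "int p ^ (t+1) dvd Dd A n y (m - 1)"
  from assms have m: "1 \<le> m" "m \<le> n" unfolding Hyp_def by auto
  have split: "{Suc (m-1)..n} = insert m {m<..n}" using m by auto
  have "Dd A n y (m-1) = int m * A m + (\<Sum>j\<in>{m<..n}. (int j * A j) * int ((j - 1) choose (m-1)) * y ^ (j - Suc (m-1)))"
    unfolding Dd_def split using m by (subst sum.insert) auto
  moreover have "int p ^ (t+1) dvd (\<Sum>j\<in>{m<..n}. (int j * A j) * int ((j - 1) choose (m-1)) * y ^ (j - Suc (m-1)))"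
    using assms unfolding Hyp_def by (intro dvd_sum) (auto intro!: dvd_mult2)
  ultimately have "int p ^ (t+1) dvd int m * A m" using H by (simp add: dvd_add_left_iff)
  then show False using assms unfolding Hyp_def by auto
qed

lemma Bc_hyp_dvd:
  assumes "Hyp p A n m t" "i \<ge> 1"
  shows "int p ^ t dvd int i * Bc p A n y i"
  by (simp only: Bc_Dd[OF assms(2)]) (rule dvd_mult[OF Dd_a[OF assms(1)]])

lemma Bc_hyp_dvd2:
  assumes "Hyp p A n m t" "i \<ge> 1" "i - 1 \<ge> m"
  shows "int p ^ (t+1) dvd int i * Bc p A n y i"
  by (simp only: Bc_Dd[OF assms(2)]) (rule dvd_mult[OF Dd_c[OF assms(1) assms(3)]])

lemma geo_zero:
  fixes b :: int
  assumes "prime p" "\<not> int p dvd b"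
  shows "(\<Sum>u<p^(Suc t). ee p (Suc t) (int p ^ t * b * int u)) = 0"
proof -
  have p0: "p > 0" using assms(1) prime_gt_0_nat by blast
  define z where "z = cis (2 * pi * real_of_int b / real p)"
  have eq: "ee p (Suc t) (int p ^ t * b * int u) = z ^ u" for u
  proof -
    have "2 * pi * real_of_int (int p ^ t * b * int u) / real p ^ Suc t = real u * (2 * pi * real_of_int b / real p)"
      using p0 by (simp add: field_simps)
    then show ?thesis unfolding ee_def z_def Complex.DeMoivre by (rule arg_cong[where f=cis])
  qed
  have z1: "z \<noteq> 1"
  proof
    assume "z = 1"
    then have "cos (2 * pi * real_of_int b / real p) = 1" unfolding z_def
      by (metis cis.sel(1) one_complex.sel(1))
    then obtain n :: int where "2 * pi * real_of_int b / real p = real_of_int n * 2 * pi"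
      using cos_one_2pi_int by blast
    then have "real_of_int b = real_of_int n * real p" using p0 by (simp add: field_simps)
    then have "b = n * int p" by (metis of_int_eq_iff of_int_mult of_int_of_nat_eq)
    then show False using assms(2) by simp
  qed
  have zp: "z ^ (p ^ Suc t) = 1"
  proof -
    have "z ^ (p ^ Suc t) = cis (real (p ^ Suc t) * (2 * pi * real_of_int b / real p))"
      unfolding z_def by (simp add: Complex.DeMoivre)
    also have "real (p ^ Suc t) * (2 * pi * real_of_int b / real p) = 2 * pi * (real_of_int (b * int p ^ t))"
      using p0 by (simp add: field_simps)
    also have "cis \<dots> = 1" by (rule cis_multiple_2pi) simp
    finally show ?thesis .
  qed
  show ?thesis unfolding eq using z1 zp by (simp add: sum_gp_strict)
qed

lemma zero1:
  assumes "prime p" "Hyp p A n 1 t" "k \<ge> t + 2"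
  shows "Ssum p k A n = 0"
  using assms(2,3)
proof (induction k arbitrary: A)
  case 0 then show ?case by simp
next
  case (Suc k)
  have p0: "p > 0" using assms(1) prime_gt_0_nat by blast
  have n1: "n \<ge> 1" using Suc.prems unfolding Hyp_def by auto
  have inner: "Ssum p k (Bc p A n (int y)) n = 0" for y
  proof -
    let ?B = "Bc p A n (int y)"
    have HB: "Hyp p ?B n 1 t"
      unfolding Hyp_def
    proof (intro conjI ballI)
      show "1 \<le> (1::nat)" "1 \<le> n" using n1 by auto
      fix j assume "j \<in> {1..n}" then show "int p ^ t dvd int j * ?B j"
        using Bc_hyp_dvd[OF Suc.prems(1)] by auto
    next
      show "\<not> int p ^ (t + 1) dvd int 1 * ?B 1"
        using Dd_b[OF Suc.prems(1)] Bc_Dd[of 1 p A n] by simp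
    next
      fix j assume "j \<in> {1<..n}" then show "int p ^ (t+1) dvd int j * ?B j"
        using Bc_hyp_dvd2[OF Suc.prems(1)] by auto
    qed
    show ?thesis
    proof (cases "k \<ge> t + 2")
      case True then show ?thesis using Suc.IH HB by blast
    next
      case False
      then have kt: "k = Suc t" using Suc.prems(2) by simp
      have extra: "int p ^ (t+1) dvd ?B i" if "i \<in> {2..n}" for i
      proof -
        have "int p ^ (t+1) dvd Dd A n (int y) (i - 1)"
          using Dd_c[OF Suc.prems(1)] that by auto
        then have "int p ^ (t+1) dvd int i * tay A n (int y) i"
          using tay_Dd[of "i-1" A n "int y"] that by simp
        then have "int p ^ (t+1) dvd int p ^ (i - 1) * tay A n (int y) i"
          using divx[OF assms(1), of i "t+1" "tay A n (int y) i"] that by simp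
        then show ?thesis unfolding Bc_def using that by simp
      qed
      have B1: "?B 1 = Dd A n (int y) 0"
        using Bc_Dd[of 1 p A n "int y"] by simp
      obtain b where b: "Dd A n (int y) 0 = int p ^ t * b"
        using Dd_a[OF Suc.prems(1)] by blast
      have nb: "\<not> int p dvd b"
      proof
        assume "int p dvd b"
        then have "int p ^ (t+1) dvd Dd A n (int y) 0" using b by (simp add: mult_dvd_mono)
        then show False using Dd_b[OF Suc.prems(1)] by simp
      qed
      have ev: "ev0 ?B n u = int p ^ t * b * u + (\<Sum>i\<in>{2..n}. ?B i * u ^ i)" for u
      proof -
        have "{..n} = insert 0 (insert 1 {2..n})" using n1 by auto
        then have "ev0 ?B n u = ?B 0 * u ^ 0 + (?B 1 * u ^ 1 + (\<Sum>i\<in>{2..n}. ?B i * u ^ i))"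
          unfolding ev0_def by simp
        then show ?thesis using B1 b by (simp add: Bc_def)
      qed
      have "ee p (Suc t) (ev0 ?B n (int u)) = ee p (Suc t) (int p ^ t * b * int u)" for u
      proof -
        have "int p ^ (t+1) dvd (\<Sum>i\<in>{2..n}. ?B i * int u ^ i)"
          using extra by (intro dvd_sum) (auto intro!: dvd_mult2)
        then obtain w where w: "(\<Sum>i\<in>{2..n}. ?B i * int u ^ i) = int p ^ Suc t * w" by auto
        have "ee p (Suc t) (int p ^ Suc t * w) = 1" by (rule ee_mult[OF p0])
        then show ?thesis unfolding ev w ee_add by simp
      qed
      then have "Ssum p k ?B n = (\<Sum>u<p^(Suc t). ee p (Suc t) (int p ^ t * b * int u))"
        unfolding Ssum_def kt by simp
      also have "\<dots> = 0" by (rule geo_zero[OF assms(1) nb])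
      finally show ?thesis .
    qed
  qed
  show ?case using Ssum_rec[OF p0] inner by simp
qed


lemma ext_data:
  fixes c :: "nat \<Rightarrow> int"
  assumes p: "prime p" and i0: "i0 \<in> {1..n}" and nd: "\<not> int p ^ (T+1) dvd c i0"
    and gt: "\<forall>i\<in>{i0<..n}. int p ^ (T+1) dvd c i"
  shows "\<exists>t' m'. t' \<le> T \<and> 1 \<le> m' \<and> m' \<le> i0 \<and> (\<forall>i\<in>{1..n}. int p ^ t' dvd c i)
     \<and> \<not> int p ^ (t'+1) dvd c m' \<and> (\<forall>i\<in>{m'<..n}. int p ^ (t'+1) dvd c i)"
proof -
  define P where "P = (\<lambda>\<tau>. \<exists>i\<in>{1..n}. \<not> int p ^ (\<tau>+1) dvd c i)"
  have PT: "P T" unfolding P_def using i0 nd by blast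
  define t' where "t' = (LEAST \<tau>. P \<tau>)"
  have Pt: "P t'" unfolding t'_def by (rule LeastI[of P T, OF PT])
  have tle: "t' \<le> T" unfolding t'_def by (rule Least_le[of P T, OF PT])
  have alld: "\<forall>i\<in>{1..n}. int p ^ t' dvd c i"
  proof (cases t')
    case 0 then show ?thesis by simp
  next
    case (Suc \<tau>)
    then have "\<not> P \<tau>" using not_less_Least[of \<tau> P] unfolding t'_def by auto
    then show ?thesis unfolding P_def using Suc by auto
  qed
  define Q where "Q = (\<lambda>i. i \<in> {1..n} \<and> \<not> int p ^ (t'+1) dvd c i)"
  obtain j where Qj: "Q j" using Pt unfolding P_def Q_def by blast
  have Qb: "\<forall>y. Q y \<longrightarrow> y \<le> n" unfolding Q_def by auto
  define m' where "m' = (GREATEST i. Q i)"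
  have Qm: "Q m'" unfolding m'_def by (rule GreatestI_nat[of Q j n]) (use Qj Qb in auto)
  have mge: "\<forall>i. Q i \<longrightarrow> i \<le> m'"
  proof (intro allI impI)
    fix i assume "Q i"
    then show "i \<le> m'" unfolding m'_def by (rule Greatest_le_nat[of Q i n]) (use Qb in auto)
  qed
  have "m' \<le> i0"
  proof (rule ccontr)
    assume "\<not> m' \<le> i0"
    then have "m' \<in> {i0<..n}" using Qm unfolding Q_def by auto
    then have "int p ^ (T+1) dvd c m'" using gt by blast
    moreover have "int p ^ (t'+1) dvd int p ^ (T+1)" using tle by (simp add: le_imp_power_dvd)
    ultimately have "int p ^ (t'+1) dvd c m'" using dvd_trans by blast
    then show False using Qm unfolding Q_def by auto
  qed
  moreover have "\<forall>i\<in>{m'<..n}. int p ^ (t'+1) dvd c i"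
  proof
    fix i assume "i \<in> {m'<..n}"
    then have "\<not> Q i" using mge by force
    moreover have "i \<in> {1..n}" using `i \<in> {m'<..n}` Qm unfolding Q_def by auto
    ultimately show "int p ^ (t'+1) dvd c i" unfolding Q_def by auto
  qed
  ultimately show ?thesis using tle alld Qm unfolding Q_def by (intro exI[of _ t'] exI[of _ m']) auto
qed

lemma mono_aux:
  fixes K :: real
  assumes "K \<ge> 0" "1 \<le> d" "d \<le> d'"
  shows "d - K / d \<le> d' - K / d'"
proof -
  have "K / d' \<le> K / d" using assms by (intro divide_left_mono) auto
  then show ?thesis using assms by linarith
qed

lemma bad_bound_exp:
  fixes K Ky :: real and my D :: nat
  assumes "K - D \<ge> 0" "Ky \<ge> K - D" "1 \<le> my" "my \<le> D"
  shows "real my - Ky / real my \<le> real D + 1 - K / real D"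
proof -
  have "Ky / my \<ge> (K - D) / my" using assms by (intro divide_right_mono) auto
  moreover have "real my - (K - D) / my \<le> real D - (K - D) / D"
    using mono_aux[of "K - D" my D] assms by simp
  moreover have "(K - D) / D = K / D - 1" using assms by (simp add: field_simps)
  ultimately show ?thesis by linarith
qed


lemma good_hyp:
  assumes "Hyp p A n m t" "\<not> int p ^ (t+1) dvd Dd A n y 0"
  shows "Hyp p (Bc p A n y) n 1 t"
  unfolding Hyp_def
proof (intro conjI ballI)
  show "1 \<le> (1::nat)" "1 \<le> n" using assms(1) unfolding Hyp_def by auto
  fix j assume "j \<in> {1..n}" then show "int p ^ t dvd int j * Bc p A n y j"
    using Bc_hyp_dvd[OF assms(1)] by auto
next
  show "\<not> int p ^ (t + 1) dvd int 1 * Bc p A n y 1"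
    using assms(2) Bc_Dd[of 1 p A n] by simp
next
  fix j assume j: "j \<in> {1<..n}"
  have "int j * Bc p A n y j = int p ^ (j - 1) * Dd A n y (j - 1)"
    using j by (intro Bc_Dd) auto
  moreover have "int p ^ (t+1) dvd int p ^ (j - 1) * Dd A n y (j - 1)"
  proof -
    obtain h where "Dd A n y (j - 1) = int p ^ t * h" using Dd_a[OF assms(1)] by blast
    moreover obtain e where "j - 1 = Suc e" using j by (cases "j - 1") auto
    ultimately show ?thesis by (simp add: mult_ac)
  qed
  ultimately show "int p ^ (t+1) dvd int j * Bc p A n y j" by simp
qed

lemma unique_bad:
  assumes p: "prime p" and H: "Hyp p A n m t" and m2: "m \<ge> 2"
    and y0: "y0 < p" and z: "z < p"
    and below: "\<forall>i < m - 1. int p ^ (t+1) dvd Dd A n (int y0) i"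
    and badz: "int p ^ (t+1) dvd Dd A n (int z) 0"
  shows "z = y0"
proof -
  have mn: "m \<le> n" using H unfolding Hyp_def by auto
  have n1: "n \<ge> 1" using mn m2 by auto
  define w where "w = int z - int y0"
  define T where "T = (\<lambda>i. Dd A n (int y0) i * w ^ i)"
  have "Dd A n (int z) 0 = (\<Sum>i\<le>n-1. T i)"
    unfolding T_def w_def by (rule Dd_taylor[OF n1])
  also have "\<dots> = T (m - 1) + (\<Sum>i\<in>{..n-1} - {m - 1}. T i)"
    using mn m2 by (subst sum.remove[of _ "m - 1"]) auto
  finally have eq: "Dd A n (int z) 0 = T (m - 1) + (\<Sum>i\<in>{..n-1} - {m - 1}. T i)" .
  have "int p ^ (t+1) dvd (\<Sum>i\<in>{..n-1} - {m - 1}. T i)"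
  proof (intro dvd_sum)
    fix i assume i: "i \<in> {..n-1} - {m - 1}"
    show "int p ^ (t+1) dvd T i"
    proof (cases "i < m - 1")
      case True then show ?thesis unfolding T_def using below by (simp add: dvd_mult2)
    next
      case False
      then have "i \<ge> m" using i by auto
      then show ?thesis unfolding T_def using Dd_c[OF H] by (simp add: dvd_mult2)
    qed
  qed
  then have "int p ^ (t+1) dvd T (m - 1)" using eq badz by (metis dvd_add_left_iff)
  moreover obtain h where h: "Dd A n (int y0) (m - 1) = int p ^ t * h" using Dd_a[OF H] by blast
  ultimately have "int p ^ t * int p dvd int p ^ t * (h * w ^ (m - 1))"
    unfolding T_def by (simp add: mult_ac)
  then have "int p dvd h * w ^ (m - 1)" using p by (simp add: prime_gt_0_nat)
  moreover have "\<not> int p dvd h"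
  proof
    assume "int p dvd h"
    then have "int p ^ (t+1) dvd Dd A n (int y0) (m - 1)" using h by (simp add: mult_dvd_mono)
    then show False using Dd_b[OF H] by simp
  qed
  moreover have pi: "prime (int p)" using p by simp
  ultimately have "int p dvd w ^ (m - 1)" using prime_dvd_mult_iff by blast
  then have "int p dvd w" using pi prime_dvd_power by blast
  moreover have "\<bar>w\<bar> < int p" unfolding w_def using y0 z by auto
  ultimately have "w = 0" using dvd_imp_le_int by force
  then show ?thesis unfolding w_def by simp
qed


lemma lmm: "(N::real) \<le> c * a \<Longrightarrow> a \<le> b \<Longrightarrow> 0 \<le> c \<Longrightarrow> N \<le> c * b"
  by (meson mult_left_mono order_trans)

lemma bad_term:
  assumes p: "prime p" and H: "Hyp p A n m t"
    and IH: "\<And>A m t. Hyp p A n m t \<Longrightarrow>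
        norm (Ssum p k A n) \<le> real p ^ k * real p powr (real m - (real k - real t) / real m)"
    and dd: "dd \<le> m - 1" "\<not> int p ^ (t+1) dvd Dd A n y dd"
    and K: "real (Suc k) - real t - real (Suc dd) \<ge> 0"
  shows "norm (Ssum p k (Bc p A n y) n) \<le>
     real p ^ Suc k * real p powr (real (Suc dd) - (real (Suc k) - real t) / real (Suc dd))"
proof -
  have p1: "real p > 1" using p prime_gt_1_nat by simp
  have mn: "1 \<le> m" "m \<le> n" using H unfolding Hyp_def by auto
  define c where "c = (\<lambda>i. int i * Bc p A n y i)"
  have i0: "Suc dd \<in> {1..n}" using dd mn by auto
  have nd: "\<not> int p ^ (t + dd + 1) dvd c (Suc dd)"
  proof
    assume "int p ^ (t + dd + 1) dvd c (Suc dd)"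
    then have "int p ^ dd * int p ^ (t+1) dvd int p ^ dd * Dd A n y dd"
      unfolding c_def using Bc_Dd[of "Suc dd" p A n y] by (simp add: power_add mult_ac)
    then have "int p ^ (t+1) dvd Dd A n y dd" using p by (simp add: prime_gt_0_nat)
    then show False using dd by simp
  qed
  have gt: "\<forall>i\<in>{Suc dd<..n}. int p ^ (t + dd + 1) dvd c i"
  proof
    fix i assume i: "i \<in> {Suc dd<..n}"
    have "c i = int p ^ (i - 1) * Dd A n y (i - 1)" unfolding c_def using i by (intro Bc_Dd) auto
    moreover obtain h where "Dd A n y (i - 1) = int p ^ t * h" using Dd_a[OF H] by blast
    ultimately have "c i = int p ^ (t + (i - 1)) * h" by (simp add: power_add mult_ac)
    moreover have "int p ^ (t + dd + 1) dvd int p ^ (t + (i - 1))"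
      using i by (intro le_imp_power_dvd) auto
    ultimately show "int p ^ (t + dd + 1) dvd c i" by simp
  qed
  obtain t' m' where tm: "t' \<le> t + dd" "1 \<le> m'" "m' \<le> Suc dd" "\<forall>i\<in>{1..n}. int p ^ t' dvd c i"
     "\<not> int p ^ (t'+1) dvd c m'" "\<forall>i\<in>{m'<..n}. int p ^ (t'+1) dvd c i"
    using ext_data[OF p i0, where c=c and T="t + dd"] nd gt by auto
  have HB: "Hyp p (Bc p A n y) n m' t'"
    unfolding Hyp_def using tm i0 unfolding c_def by auto
  have b1: "norm (Ssum p k (Bc p A n y) n) \<le> real p ^ k * real p powr (real m' - (real k - real t') / real m')"
    by (rule IH[OF HB])
  have ex: "real m' - (real k - real t') / real m' \<le> real (Suc dd) + 1 - (real (Suc k) - real t) / real (Suc dd)"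
    by (rule bad_bound_exp) (use K tm in auto)
  have "real p powr (real m' - (real k - real t') / real m') \<le>
        real p powr (real (Suc dd) + 1 - (real (Suc k) - real t) / real (Suc dd))"
    using p1 ex by (intro powr_mono) auto
  also have "\<dots> = real p powr (1 + (real (Suc dd) - (real (Suc k) - real t) / real (Suc dd)))"
    by (rule arg_cong[where f="\<lambda>x. real p powr x"]) simp
  also have "\<dots> = real p * real p powr (real (Suc dd) - (real (Suc k) - real t) / real (Suc dd))"
    using p1 by (subst powr_add) simp
  finally have "real p powr (real m' - (real k - real t') / real m') \<le> real p * real p powr (real (Suc dd) - (real (Suc k) - real t) / real (Suc dd))" .
  from lmm[OF b1 this] show ?thesis by (simp add: mult_ac)
qed

lemma core:
  assumes p: "prime p"
  shows "Hyp p A n m t \<Longrightarrow>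
     norm (Ssum p k A n) \<le> real p ^ k * real p powr (real m - (real k - real t) / real m)"
proof (induction k arbitrary: A m t)
  case 0
  have m1: "m \<ge> 1" using "0.prems" unfolding Hyp_def by auto
  have "real m - (0 - real t) / real m \<ge> 0" using m1 by (simp add: field_simps)
  then have "real p powr (real m - (real 0 - real t) / real m) \<ge> 1"
    using prime_gt_1_nat[OF p] by (intro ge_one_powr_ge_zero) auto
  then show ?case using Ssum_triv[of p 0 A n] by simp
next
  case (Suc k)
  have p0: "p > 0" and p1: "real p > 1" using p prime_gt_1_nat prime_gt_0_nat by auto
  have H: "Hyp p A n m t" by fact
  have mn: "1 \<le> m" "m \<le> n" using H unfolding Hyp_def by auto
  define K where "K = real (Suc k) - real t"
  have RHSnn: "0 \<le> real p ^ Suc k * real p powr (real m - K / real m)" by simp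
  have main: "norm (Ssum p (Suc k) A n) \<le> real p ^ Suc k * real p powr (real m - K / real m)"
  proof (cases "K \<le> real m * real m")
    case True
    have "real m - K / real m \<ge> 0" using True mn by (simp add: field_simps)
    then have one: "real p powr (real m - K / real m) \<ge> 1"
      using p1 by (intro ge_one_powr_ge_zero) auto
    have "norm (Ssum p (Suc k) A n) \<le> real p ^ Suc k * 1" using Ssum_triv[of p "Suc k" A n] by simp
    from lmm[OF this one] show ?thesis by (simp add: K_def)
  next
    case False
    then have Kbig: "K > real m * real m" by simp
    show ?thesis
    proof (cases "m = 1")
      case True
      have "Suc k \<ge> t + 2" using Kbig True unfolding K_def by simp
      then have "Ssum p (Suc k) A n = 0" using zero1[OF p] H True by blast
      then show ?thesis using RHSnn by simp
    next
      case False
      then have m2: "m \<ge> 2" using mn by auto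
      have "real m * real m \<ge> 2 * real m" using m2 by (intro mult_right_mono) auto
      then have Km: "K \<ge> 2 * real m" using Kbig by simp
      define bad where "bad = (\<lambda>y::nat. int p ^ (t+1) dvd Dd A n (int y) 0)"
      define dd where "dd = (\<lambda>y::nat. LEAST i. \<not> int p ^ (t+1) dvd Dd A n (int y) i)"
      have dd_le: "dd y \<le> m - 1" for y unfolding dd_def by (rule Least_le) (rule Dd_b[OF H])
      have dd_nd: "\<not> int p ^ (t+1) dvd Dd A n (int y) (dd y)" for y
        unfolding dd_def by (rule LeastI) (rule Dd_b[OF H])
      have dd_below: "\<forall>i < dd y. int p ^ (t+1) dvd Dd A n (int y) i" for y
        using not_less_Least unfolding dd_def by blast
      have good0: "Ssum p k (Bc p A n (int y)) n = 0" if "\<not> bad y" for y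
      proof -
        have "Hyp p (Bc p A n (int y)) n 1 t" using good_hyp[OF H] that unfolding bad_def by blast
        moreover have "k \<ge> t + 2" using Km m2 unfolding K_def by simp
        ultimately show ?thesis using zero1[OF p] by blast
      qed
      have badb: "norm (Ssum p k (Bc p A n (int y)) n) \<le>
          real p ^ Suc k * real p powr (real (Suc (dd y)) - K / real (Suc (dd y)))" for y
        unfolding K_def
      proof (rule bad_term[OF p H Suc.IH dd_le dd_nd])
        show "real (Suc k) - real t - real (Suc (dd y)) \<ge> 0"
          using dd_le[of y] Km mn unfolding K_def by simp
      qed
      define f where "f = (\<lambda>y. norm (Ssum p k (Bc p A n (int y)) n))"
      have "norm (Ssum p (Suc k) A n) \<le> (\<Sum>y<p. norm (ee p (Suc k) (ev0 A n (int y)) * Ssum p k (Bc p A n (int y)) n))"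
        unfolding Ssum_rec[OF p0] by (rule norm_sum)
      also have "\<dots> = (\<Sum>y<p. f y)" unfolding f_def by (simp add: norm_mult)
      finally have S1: "norm (Ssum p (Suc k) A n) \<le> (\<Sum>y<p. f y)" .
      show ?thesis
      proof (cases "\<exists>y0<p. bad y0 \<and> dd y0 = m - 1")
        case True
        then obtain y0 where y0: "y0 < p" "bad y0" "dd y0 = m - 1" by blast
        have others: "f y = 0" if "y \<in> {..<p} - {y0}" for y
        proof (cases "bad y")
          case True
          have "y = y0"
            by (rule unique_bad[OF p H m2 y0(1)]) (use that True y0 dd_below[of y0] bad_def in auto)
          then show ?thesis using that by simp
        next
          case False then show ?thesis unfolding f_def using good0 by simp
        qed
        have "(\<Sum>y<p. f y) = f y0 + (\<Sum>y\<in>{..<p} - {y0}. f y)"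
          using y0 by (subst sum.remove[of _ y0]) auto
        also have "\<dots> = f y0" using others by simp
        also have "\<dots> \<le> real p ^ Suc k * real p powr (real m - K / real m)"
          unfolding f_def using badb[of y0] y0 mn by simp
        finally show ?thesis using S1 by simp
      next
        case False
        define R where "R = real p ^ Suc k * real p powr (real (m - 1) - K / real (m - 1))"
        have fy: "f y \<le> R" if "y < p" for y
        proof (cases "bad y")
          case True
          have "dd y \<noteq> m - 1" using False that True by blast
          then have "dd y \<le> m - 2" using dd_le[of y] by simp
          then have "real (Suc (dd y)) - K / real (Suc (dd y)) \<le> real (m - 1) - K / real (m - 1)"
            using Km m2 by (intro mono_aux) auto
          then have "real p powr (real (Suc (dd y)) - K / real (Suc (dd y))) \<le>
                 real p powr (real (m - 1) - K / real (m - 1))"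
            using p1 by (intro powr_mono) auto
          from lmm[OF badb[of y] this] show ?thesis unfolding f_def R_def by simp
        next
          case False then show ?thesis unfolding f_def R_def using good0 by simp
        qed
        have "(\<Sum>y<p. f y) \<le> (\<Sum>y<p. R)" using fy by (intro sum_mono) auto
        also have "\<dots> = real p * R" by simp
        also have "\<dots> = real p ^ Suc k * (real p * real p powr (real (m - 1) - K / real (m - 1)))"
          unfolding R_def by (simp add: mult_ac)
        also have "real p * real p powr (real (m - 1) - K / real (m - 1)) = real p powr (real m - K / real (m - 1))"
        proof -
          have "real m - K / real (m - 1) = 1 + (real (m - 1) - K / real (m - 1))"
            using m2 by (simp add: of_nat_diff)
          then show ?thesis using p1 by (simp only: powr_add powr_one)
        qed
        also have "real p powr (real m - K / real (m - 1)) \<le> real p powr (real m - K / real m)"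
        proof -
          have "K / real m \<le> K / real (m - 1)" using Km m2 by (intro divide_left_mono) auto
          then show ?thesis using p1 by (intro powr_mono) auto
        qed
        finally show ?thesis using S1 by (simp add: mult_left_mono)
      qed
    qed
  qed
  then show ?case unfolding K_def by simp
qed


definition cr :: "nat \<Rightarrow> int \<Rightarrow> real \<Rightarrow> real \<Rightarrow> bool" where
  "cr p L x y \<longleftrightarrow> (x - y) / real p powi L \<in> \<int>"

definition den :: "nat \<Rightarrow> nat \<Rightarrow> real \<Rightarrow> bool" where
  "den p k x \<longleftrightarrow> x * real p ^ k \<in> \<int>"

definition Qb :: "nat \<Rightarrow> nat \<Rightarrow> padic \<Rightarrow> bool" where
  "Qb p k d \<longleftrightarrow> (\<forall>j. d j < p) \<and> (\<forall>j < - int k. d j = 0)"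

lemma pw_int: "0 \<le> j \<Longrightarrow> real p powi j \<in> \<int>"
  by (simp add: power_int_nonneg_exp)

lemma pw_pos: "1 < p \<Longrightarrow> real p powi j > 0"
  by simp

lemma pw_div: "1 < p \<Longrightarrow> real p powi a / real p powi b = real p powi (a - b)"
  by (simp add: power_int_diff)

lemma pw_mult: "1 < p \<Longrightarrow> real p powi a * real p powi b = real p powi (a + b)"
  by (simp add: power_int_add)

lemma cr_refl[simp]: "cr p L x x"
  unfolding cr_def by simp

lemma cr_sym: "cr p L x y \<Longrightarrow> cr p L y x"
  unfolding cr_def
proof -
  assume "(x - y) / real p powi L \<in> \<int>"
  then have "- ((x - y) / real p powi L) \<in> \<int>" by (rule Ints_minus)
  then show "(y - x) / real p powi L \<in> \<int>" by (simp add: minus_divide_left)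
qed

lemma cr_trans: "cr p L x y \<Longrightarrow> cr p L y z \<Longrightarrow> cr p L x z"
  unfolding cr_def
proof -
  assume "(x - y) / real p powi L \<in> \<int>" "(y - z) / real p powi L \<in> \<int>"
  then have "(x - y) / real p powi L + (y - z) / real p powi L \<in> \<int>" by (rule Ints_add)
  then show "(x - z) / real p powi L \<in> \<int>" by (simp add: add_divide_distrib[symmetric])
qed

lemma cr_add: "cr p L a b \<Longrightarrow> cr p L c d \<Longrightarrow> cr p L (a + c) (b + d)"
  unfolding cr_def
proof -
  assume "(a - b) / real p powi L \<in> \<int>" "(c - d) / real p powi L \<in> \<int>"
  then have "(a - b) / real p powi L + (c - d) / real p powi L \<in> \<int>" by (rule Ints_add)
  then show "(a + c - (b + d)) / real p powi L \<in> \<int>" by (simp add: add_divide_distrib[symmetric] algebra_simps)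
qed

lemma cr_mono: "1 < p \<Longrightarrow> L' \<le> L \<Longrightarrow> cr p L x y \<Longrightarrow> cr p L' x y"
  unfolding cr_def
proof -
  assume p: "1 < p" and "L' \<le> L" and h: "(x - y) / real p powi L \<in> \<int>"
  have eq: "(x - y) / real p powi L' = (x - y) / real p powi L * real p powi (L - L')"
    using p by (simp add: power_int_diff field_simps)
  have "real p powi (L - L') \<in> \<int>" using `L' \<le> L` by (intro pw_int) simp
  with h have "(x - y) / real p powi L * real p powi (L - L') \<in> \<int>" by (rule Ints_mult)
  then show "(x - y) / real p powi L' \<in> \<int>" by (simp only: eq)
qed

lemma cr_mult_den: "1 < p \<Longrightarrow> den p a z \<Longrightarrow> cr p L x y \<Longrightarrow> cr p (L - int a) (z * x) (z * y)"
  unfolding cr_def den_def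
proof -
  assume p: "1 < p" and hz: "z * real p ^ a \<in> \<int>" and h: "(x - y) / real p powi L \<in> \<int>"
  have eq: "(z * x - z * y) / real p powi (L - int a) = (z * real p ^ a) * ((x - y) / real p powi L)"
    using p by (simp add: power_int_diff field_simps)
  from hz h have "(z * real p ^ a) * ((x - y) / real p powi L) \<in> \<int>" by (rule Ints_mult)
  then show "(z * x - z * y) / real p powi (L - int a) \<in> \<int>" by (simp only: eq)
qed

lemma cr_mult_int: "1 < p \<Longrightarrow> z \<in> \<int> \<Longrightarrow> cr p L x y \<Longrightarrow> cr p L (z * x) (z * y)"
  using cr_mult_den[of p 0 z L x y] unfolding den_def by simp

lemma cr_0: "cr p 0 x y \<longleftrightarrow> x - y \<in> \<int>"
  unfolding cr_def by simp

lemma cr_int_le0: "1 < p \<Longrightarrow> L \<le> 0 \<Longrightarrow> z \<in> \<int> \<Longrightarrow> cr p L z 0"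
  unfolding cr_def
proof -
  assume p: "1 < p" and "L \<le> 0" and z: "z \<in> \<int>"
  have "(z - 0) / real p powi L = z * real p powi (- L)"
    using p by (simp add: power_int_minus divide_inverse)
  moreover have "real p powi (- L) \<in> \<int>" using `L \<le> 0` by (intro pw_int) simp
  ultimately show "(z - 0) / real p powi L \<in> \<int>" using z by simp
qed

lemma den_add: "den p k x \<Longrightarrow> den p k y \<Longrightarrow> den p k (x + y)"
  unfolding den_def by (simp add: distrib_right)

lemma den_mono: "k \<le> k' \<Longrightarrow> den p k x \<Longrightarrow> den p k' x"
  unfolding den_def
proof -
  assume "k \<le> k'" and h: "x * real p ^ k \<in> \<int>"
  have eq: "x * real p ^ k' = x * real p ^ k * real p ^ (k' - k)"
    using `k \<le> k'` by (simp add: power_add[symmetric])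
  have "x * real p ^ k * real p ^ (k' - k) \<in> \<int>" by (rule Ints_mult[OF h]) simp
  then show "x * real p ^ k' \<in> \<int>" by (simp only: eq)
qed

lemma den_mult: "den p a x \<Longrightarrow> den p b y \<Longrightarrow> den p (a + b) (x * y)"
  unfolding den_def
proof -
  assume "x * real p ^ a \<in> \<int>" "y * real p ^ b \<in> \<int>"
  then have "(x * real p ^ a) * (y * real p ^ b) \<in> \<int>" by simp
  then show "x * y * real p ^ (a + b) \<in> \<int>" by (simp add: power_add mult_ac)
qed

lemma den_int: "x \<in> \<int> \<Longrightarrow> den p k x"
  unfolding den_def by simp

lemma den_sum: "(\<And>i. i \<in> S \<Longrightarrow> den p k (f i)) \<Longrightarrow> den p k (\<Sum>i\<in>S. f i)"
  unfolding den_def by (simp add: sum_distrib_right Ints_sum)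

lemma den_0_int: "den p 0 x \<longleftrightarrow> x \<in> \<int>"
  unfolding den_def by simp


lemma Qb_fin: "Qb p k d \<Longrightarrow> finite {j. j < N \<and> d j \<noteq> 0}"
proof -
  assume "Qb p k d"
  then have "{j. j < N \<and> d j \<noteq> 0} \<subseteq> {- int k..<N}" unfolding Qb_def by (auto simp: not_less[symmetric])
  then show ?thesis by (rule finite_subset) simp
qed

lemma ptrunc_agree: "(\<And>j. j < N \<Longrightarrow> d j = d' j) \<Longrightarrow> ptrunc p N d = ptrunc p N d'"
  unfolding ptrunc_def
proof -
  assume h: "\<And>j. j < N \<Longrightarrow> d j = d' j"
  then have "{j. j < N \<and> d j \<noteq> 0} = {j. j < N \<and> d' j \<noteq> 0}" by auto
  then show "(\<Sum>j\<in>{j. j < N \<and> d j \<noteq> 0}. real (d j) * real p powi j) =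
    (\<Sum>j\<in>{j. j < N \<and> d' j \<noteq> 0}. real (d' j) * real p powi j)"
    using h by (intro sum.cong) auto
qed

lemma ptrunc_nonneg: "ptrunc p N d \<ge> 0"
  unfolding ptrunc_def by (intro sum_nonneg) simp

lemma ptrunc_cr:
  assumes p: "1 < p" and Q: "Qb p k d" and NN: "N \<le> N'"
  shows "cr p N (ptrunc p N' d) (ptrunc p N d)"
proof -
  let ?S' = "{j. j < N' \<and> d j \<noteq> 0}" and ?S = "{j. j < N \<and> d j \<noteq> 0}"
  have sub: "?S \<subseteq> ?S'" using NN by auto
  have fin: "finite ?S'" by (rule Qb_fin[OF Q])
  have "ptrunc p N' d = (\<Sum>j\<in>?S' - ?S. real (d j) * real p powi j) + ptrunc p N d"
    unfolding ptrunc_def by (rule sum.subset_diff[OF sub fin])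
  then have eq: "(ptrunc p N' d - ptrunc p N d) / real p powi N = (\<Sum>j\<in>?S' - ?S. real (d j) * real p powi (j - N))"
    using p by (simp add: sum_divide_distrib power_int_diff)
  have "(\<Sum>j\<in>?S' - ?S. real (d j) * real p powi (j - N)) \<in> \<int>"
    by (intro Ints_sum Ints_mult pw_int) auto
  then show ?thesis unfolding cr_def eq .
qed

lemma ptrunc_den:
  assumes p: "1 < p" and Q: "Qb p k d"
  shows "den p k (ptrunc p N d)"
  unfolding ptrunc_def
proof (intro den_sum)
  fix j assume j: "j \<in> {j. j < N \<and> d j \<noteq> 0}"
  then have "j \<ge> - int k" using Q unfolding Qb_def by (auto simp: not_less[symmetric])
  have e: "real p powi j * real p ^ k = real p powi (j + int k)"
    using p by (simp add: power_int_add)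
  have "real p powi (j + int k) \<in> \<int>" using `j \<ge> - int k` by (intro pw_int) simp
  then have "real (d j) * (real p powi j * real p ^ k) \<in> \<int>" unfolding e by simp
  then show "den p k (real (d j) * real p powi j)" unfolding den_def by (simp add: mult.assoc)
qed

lemma geo_int:
  assumes p: "1 < p"
  shows "(\<Sum>j\<in>{a..<a + int i}. (real p - 1) * real p powi j) = real p powi (a + int i) - real p powi a"
proof (induction i)
  case 0 then show ?case by simp
next
  case (Suc i)
  have "{a..<a + int (Suc i)} = insert (a + int i) {a..<a + int i}" by auto
  then have "(\<Sum>j\<in>{a..<a + int (Suc i)}. (real p - 1) * real p powi j)
     = (real p - 1) * real p powi (a + int i) + (\<Sum>j\<in>{a..<a + int i}. (real p - 1) * real p powi j)"
    by simp
  also have "\<dots> = (real p - 1) * real p powi (a + int i) + real p powi (a + int i) - real p powi a"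
    using Suc by simp
  also have "\<dots> = real p powi (a + int i) * real p - real p powi a" by (simp add: algebra_simps)
  also have "real p powi (a + int i) * real p = real p powi (a + int (Suc i))"
  proof -
    have e: "a + int (Suc i) = (a + int i) + 1" by simp
    show ?thesis by (subst e, subst power_int_add_1) (use p in auto)
  qed
  finally show ?case .
qed

lemma ptrunc_lt:
  assumes p: "1 < p" and Q: "Qb p k d"
  shows "ptrunc p N d < real p powi N"
proof (cases "N \<ge> - int k")
  case False
  then have "{j. j < N \<and> d j \<noteq> 0} = {}" using Q unfolding Qb_def by auto
  then show ?thesis unfolding ptrunc_def using p by simp
next
  case True
  have "ptrunc p N d = (\<Sum>j\<in>{j. j < N \<and> d j \<noteq> 0}. real (d j) * real p powi j)" unfolding ptrunc_def ..
  also have "\<dots> \<le> (\<Sum>j\<in>{- int k..<N}. real (d j) * real p powi j)"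
    using Q unfolding Qb_def by (intro sum_mono2) (auto simp: not_less[symmetric])
  also have "\<dots> \<le> (\<Sum>j\<in>{- int k..<N}. (real p - 1) * real p powi j)"
  proof (intro sum_mono mult_right_mono)
    fix j
    have "d j < p" using Q unfolding Qb_def by blast
    then have "real (Suc (d j)) \<le> real p" by (simp only: of_nat_le_iff Suc_le_eq)
    then show "real (d j) \<le> real p - 1" by simp
  qed simp
  also have "\<dots> = real p powi N - real p powi (- int k)"
    using geo_int[OF p, of "- int k" "nat (N + int k)"] True by simp
  also have "\<dots> < real p powi N" using p by simp
  finally show ?thesis .
qed


lemma ptrunc_eq0_iff:
  assumes Q: "Qb p k d" and p: "1 < p"
  shows "ptrunc p N d = 0 \<longleftrightarrow> (\<forall>j<N. d j = 0)"
proof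
  assume h: "ptrunc p N d = 0"
  have "\<forall>j\<in>{j. j < N \<and> d j \<noteq> 0}. real (d j) * real p powi j = 0"
    using h unfolding ptrunc_def by (subst sum_nonneg_eq_0_iff[symmetric]) (use Qb_fin[OF Q] in auto)
  then show "\<forall>j<N. d j = 0" using p by auto
next
  assume "\<forall>j<N. d j = 0"
  then have "{j. j < N \<and> d j \<noteq> 0} = {}" by auto
  then show "ptrunc p N d = 0" unfolding ptrunc_def by simp
qed

lemma Ints_unit_interval: "(x::real) \<in> \<int> \<Longrightarrow> 0 \<le> x \<Longrightarrow> x < 1 \<Longrightarrow> x = 0"
  by (auto elim!: Ints_cases)

lemma cr_ptrunc0_iff:
  assumes Q: "Qb p k d" and p: "1 < p"
  shows "cr p N (ptrunc p N d) 0 \<longleftrightarrow> ptrunc p N d = 0"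
proof
  assume "cr p N (ptrunc p N d) 0"
  then have i: "ptrunc p N d / real p powi N \<in> \<int>" unfolding cr_def by simp
  have "0 \<le> ptrunc p N d / real p powi N" using ptrunc_nonneg p by simp
  moreover have "ptrunc p N d / real p powi N < 1" using ptrunc_lt[OF p Q] p by simp
  ultimately have "ptrunc p N d / real p powi N = 0" using Ints_unit_interval i by blast
  then show "ptrunc p N d = 0" using p by simp
qed simp

lemma pdigit_cr:
  assumes p: "1 < p" and c: "cr p L x y" and j: "j < L"
  shows "pdigit p j x = pdigit p j y"
proof -
  obtain z where z: "(x - y) / real p powi L = of_int z" using c unfolding cr_def by (auto elim: Ints_cases)
  define e where "e = nat (L - j)"
  have e1: "e \<ge> 1" using j unfolding e_def by simp
  have "x / real p powi j = y / real p powi j + of_int (z * int p ^ e)"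
  proof -
    have "x / real p powi j - y / real p powi j = (x - y) / real p powi L * real p powi (L - j)"
      using p by (simp add: power_int_diff field_simps)
    also have "real p powi (L - j) = real p ^ e" unfolding e_def using j by (simp add: power_int_nonneg_exp)
    finally show ?thesis using z by simp
  qed
  then have "\<lfloor>x / real p powi j\<rfloor> = \<lfloor>y / real p powi j\<rfloor> + z * int p ^ e" by (simp only: floor_add_int)
  moreover have "int p dvd z * int p ^ e" using e1 by (simp add: dvd_power)
  ultimately have "\<lfloor>x / real p powi j\<rfloor> mod int p = \<lfloor>y / real p powi j\<rfloor> mod int p"
  proof -
    assume a1: "\<lfloor>x / real p powi j\<rfloor> = \<lfloor>y / real p powi j\<rfloor> + z * int p ^ e" and a2: "int p dvd z * int p ^ e"
    have "(\<lfloor>y / real p powi j\<rfloor> + z * int p ^ e) mod int p = (\<lfloor>y / real p powi j\<rfloor> + (z * int p ^ e) mod int p) mod int p"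
      by (simp add: mod_add_right_eq)
    also have "(z * int p ^ e) mod int p = 0" using a2 by simp
    finally show ?thesis using a1 by simp
  qed
  then show ?thesis unfolding pdigit_def by simp
qed

lemma pdigit_lt: "1 < p \<Longrightarrow> pdigit p j q < p"
  unfolding pdigit_def by (simp add: nat_less_iff)

lemma alg_aux: "t + P * (a + p * b) = t + a * P + (P * p) * (b::real)"
  by (simp add: algebra_simps)

lemma recon:
  assumes p: "1 < p" and dq: "den p k q"
  shows "Qb p k (\<lambda>j. pdigit p j q)" and "cr p L (ptrunc p L (\<lambda>j. pdigit p j q)) q"
proof -
  let ?d = "\<lambda>j. pdigit p j q"
  obtain u where u: "q * real p ^ k = of_int u" using dq unfolding den_def by (auto elim: Ints_cases)
  have fl_int: "\<lfloor>q / real p powi j\<rfloor> = u * int p ^ nat (- int k - j) \<and> q / real p powi j = of_int (u * int p ^ nat (- int k - j))"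
    if "j \<le> - int k" for j
  proof -
    have e1: "real p powi (- int k - j) = real p powi (- int k) / real p powi j"
      using p by (simp add: power_int_diff)
    have e2: "real p powi (- int k) = 1 / real p ^ k" by (simp add: power_int_minus_divide)
    have "q / real p powi j = q * real p ^ k * real p powi (- int k - j)"
      unfolding e1 e2 using p by simp
    also have "\<dots> = of_int (u * int p ^ nat (- int k - j))"
      using that u by (simp add: power_int_nonneg_exp)
    finally have h: "q / real p powi j = of_int (u * int p ^ nat (- int k - j))" .
    show ?thesis
    proof (rule conjI)
      show "\<lfloor>q / real p powi j\<rfloor> = u * int p ^ nat (- int k - j)" by (simp only: h floor_of_int)
    qed (rule h)
  qed
  show Q: "Qb p k ?d" unfolding Qb_def
  proof (intro conjI allI impI)
    fix j show "?d j < p" using pdigit_lt[OF p] .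
  next
    fix j :: int assume "j < - int k"
    then have "int p dvd u * int p ^ nat (- int k - j)" by (simp add: dvd_power)
    then have dv: "(u * int p ^ nat (- int k - j)) mod int p = 0" by (rule dvd_imp_mod_0)
    have jle: "j \<le> - int k" using `j < - int k` by simp
    have "\<lfloor>q / real p powi j\<rfloor> mod int p = (u * int p ^ nat (- int k - j)) mod int p"
      by (simp only: conjunct1[OF fl_int[OF jle]])
    then have "\<lfloor>q / real p powi j\<rfloor> mod int p = 0" using dv by simp
    then show "?d j = 0" unfolding pdigit_def by simp
  qed
  have main: "q = ptrunc p (- int k + int i) ?d + real p powi (- int k + int i) * \<lfloor>q / real p powi (- int k + int i)\<rfloor>" for i
  proof (induction i)
    case 0
    have pt0: "ptrunc p (- int k) ?d = 0" using Q unfolding ptrunc_def Qb_def by auto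
    define P where "P = real p powi (- int k)"
    have P0: "P \<noteq> 0" unfolding P_def using p by simp
    have h: "q / P = of_int \<lfloor>q / P\<rfloor>"
      using fl_int[of "- int k"] unfolding P_def by simp
    have "q = (q / P) * P" using P0 by simp
    also have "\<dots> = of_int \<lfloor>q / P\<rfloor> * P" using h by (rule arg_cong[where f="\<lambda>x. x * P"])
    finally have hq: "q = P * of_int \<lfloor>q / P\<rfloor>" by (simp only: mult.commute)
    have e: "- int k + int 0 = - int k" by simp
    show ?case unfolding e pt0 add_0_left using hq unfolding P_def .
  next
    case (Suc i)
    define L where "L = - int k + int i"
    define f where "f = \<lfloor>q / real p powi L\<rfloor>"
    have L1: "- int k + int (Suc i) = L + 1" unfolding L_def by simp
    have fA: "\<lfloor>q / real p powi (L + 1)\<rfloor> = f div int p"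
    proof -
      have e: "real p powi (L + 1) = real p powi L * real p" using p by (simp add: power_int_add_1)
      have h: "q / real p powi (L + 1) = (q / real p powi L) / real_of_int (int p)"
        unfolding e by simp
      have "\<lfloor>(q / real p powi L) / real_of_int (int p)\<rfloor> = \<lfloor>q / real p powi L\<rfloor> div int p"
        by (rule floor_divide_real_eq_div) simp
      then show ?thesis unfolding f_def h .
    qed
    have fB: "ptrunc p (L + 1) ?d = ptrunc p L ?d + real (?d L) * real p powi L"
    proof (cases "?d L = 0")
      case True
      then have "{j. j < L + 1 \<and> ?d j \<noteq> 0} = {j. j < L \<and> ?d j \<noteq> 0}" by (auto simp: le_less)
      then show ?thesis unfolding ptrunc_def using True by simp
    next
      case False
      then have "{j. j < L + 1 \<and> ?d j \<noteq> 0} = insert L {j. j < L \<and> ?d j \<noteq> 0}" by (auto simp: le_less)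
      then show ?thesis unfolding ptrunc_def using Qb_fin[OF Q, of L] by simp
    qed
    have fC: "real (?d L) = of_int (f mod int p)"
      unfolding pdigit_def f_def using p by simp
    have fD: "real_of_int f = of_int (f mod int p) + real p * of_int (f div int p)"
    proof -
      have e: "f = f mod int p + int p * (f div int p)" by simp
      have "real_of_int f = real_of_int (f mod int p + int p * (f div int p))" using e by (rule arg_cong)
      also have "\<dots> = of_int (f mod int p) + real p * of_int (f div int p)" by (simp only: of_int_add of_int_mult of_int_of_nat_eq)
      finally show ?thesis .
    qed
    have fE: "q = ptrunc p L ?d + real p powi L * of_int f"
      using Suc unfolding L_def f_def .
    have fF: "real p powi (L + 1) = real p powi L * real p" using p by (simp add: power_int_add_1)
    have "q = ptrunc p L ?d + real p powi L * of_int f" by (rule fE)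
    also have "\<dots> = ptrunc p L ?d + real (?d L) * real p powi L + (real p powi L * real p) * of_int (f div int p)"
      unfolding fD fC by (rule alg_aux)
    also have "\<dots> = ptrunc p (L+1) ?d + real p powi (L+1) * of_int (f div int p)"
      unfolding fB fF ..
    also have "\<dots> = ptrunc p (L+1) ?d + real p powi (L+1) * of_int \<lfloor>q / real p powi (L+1)\<rfloor>"
      unfolding fA ..
    finally show ?case unfolding L1 .
  qed
  show "cr p L (ptrunc p L ?d) q"
  proof (cases "L \<ge> - int k")
    case True
    define i where "i = nat (L + int k)"
    have i: "L = - int k + int i" using True unfolding i_def by simp
    define fl where "fl = \<lfloor>q / real p powi L\<rfloor>"
    define t where "t = ptrunc p L ?d"
    have m: "q = t + real p powi L * of_int fl"
      using main[of i] unfolding i[symmetric] fl_def t_def .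
    have "real p powi L \<noteq> 0" using p by simp
    then have "(t - q) / real p powi L = - of_int fl"
      using m by (simp add: field_simps)
    then have "(ptrunc p L ?d - q) / real p powi L = - of_int fl" unfolding t_def .
    then show ?thesis unfolding cr_def by simp
  next
    case False
    have z: "ptrunc p L ?d = 0" using Q False unfolding ptrunc_def Qb_def by auto
    have "q / real p powi L \<in> \<int>" using fl_int[of L] False by simp
    then have "- (q / real p powi L) \<in> \<int>" by (rule Ints_minus)
    moreover have "(ptrunc p L ?d - q) / real p powi L = - (q / real p powi L)" unfolding z by simp
    ultimately show ?thesis unfolding cr_def by simp
  qed
qed


lemma Qb_mono: "Qb p k d \<Longrightarrow> k \<le> k' \<Longrightarrow> Qb p k' d"
  unfolding Qb_def by auto

lemma ev_unique:
  assumes "\<forall>\<^sub>F M in sequentially. f M = a" "\<forall>\<^sub>F M in sequentially. f M = b"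
  shows "a = b"
proof -
  have "\<forall>\<^sub>F M in sequentially. f M = a \<and> f M = b" using assms by (rule eventually_conj)
  then obtain N where "\<forall>M\<ge>N. f M = a \<and> f M = b" unfolding eventually_sequentially by blast
  then show ?thesis by auto
qed

lemma gen:
  assumes p: "1 < p" and dn: "\<And>M. den p K (s M)"
    and stab: "\<And>M M'. M \<le> M' \<Longrightarrow> cr p (int M - c) (s M') (s M)"
  shows "Qb p K (\<lambda>j. THE c'. \<forall>\<^sub>F M in sequentially. pdigit p j (s M) = c')"
    and "\<exists>M0. \<forall>M\<ge>M0. cr p L (ptrunc p L (\<lambda>j. THE c'. \<forall>\<^sub>F M in sequentially. pdigit p j (s M) = c')) (s M)"
proof -
  define d where "d = (\<lambda>j. THE c'. \<forall>\<^sub>F M in sequentially. pdigit p j (s M) = c')"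
  define N where "N = (\<lambda>j::int. nat (j + 1 + c))"
  have stable: "pdigit p j (s M) = pdigit p j (s (N j))" if "M \<ge> N j" for j M
  proof -
    have "cr p (int (N j) - c) (s M) (s (N j))" using stab that by blast
    moreover have "j < int (N j) - c" unfolding N_def by simp
    ultimately show ?thesis by (rule pdigit_cr[OF p])
  qed
  have dj: "d j = pdigit p j (s (N j))" for j
  proof -
    have ev: "\<forall>\<^sub>F M in sequentially. pdigit p j (s M) = pdigit p j (s (N j))"
      unfolding eventually_sequentially using stable by blast
    show ?thesis unfolding d_def
    proof (rule the_equality)
      fix c' assume "\<forall>\<^sub>F M in sequentially. pdigit p j (s M) = c'"
      then show "c' = pdigit p j (s (N j))" using ev ev_unique by metis
    qed (rule ev)
  qed
  show "Qb p K (\<lambda>j. THE c'. \<forall>\<^sub>F M in sequentially. pdigit p j (s M) = c')"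
    unfolding d_def[symmetric] Qb_def
  proof (intro conjI allI impI)
    fix j show "d j < p" unfolding dj by (rule pdigit_lt[OF p])
  next
    fix j :: int assume "j < - int K"
    have "Qb p K (\<lambda>j. pdigit p j (s (N j')))" for j' by (rule recon(1)[OF p dn])
    then show "d j = 0" unfolding dj Qb_def using `j < - int K` by blast
  qed
  show "\<exists>M0. \<forall>M\<ge>M0. cr p L (ptrunc p L (\<lambda>j. THE c'. \<forall>\<^sub>F M in sequentially. pdigit p j (s M) = c')) (s M)"
    unfolding d_def[symmetric]
  proof (intro exI allI impI)
    fix M assume M: "M \<ge> nat (L + c)"
    have "ptrunc p L d = ptrunc p L (\<lambda>j. pdigit p j (s M))"
    proof (rule ptrunc_agree)
      fix j assume "j < L"
      then have "N j \<le> M" using M unfolding N_def by simp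
      then show "d j = pdigit p j (s M)" unfolding dj by (rule stable[symmetric])
    qed
    then show "cr p L (ptrunc p L d) (s M)" using recon(2)[OF p dn] by simp
  qed
qed

definition apx :: "nat \<Rightarrow> padic \<Rightarrow> (nat \<Rightarrow> real) \<Rightarrow> bool" where
  "apx p x q \<longleftrightarrow> (\<exists>k. \<forall>M. den p k (q M)) \<and> (\<forall>L. \<exists>M0. \<forall>M\<ge>M0. cr p L (ptrunc p L x) (q M))"

lemma apx_self: "1 < p \<Longrightarrow> Qb p k x \<Longrightarrow> apx p x (\<lambda>M. ptrunc p (int M) x)"
  unfolding apx_def
proof (intro conjI allI exI impI)
  assume p: "1 < p" and Q: "Qb p k x"
  fix M show "den p k (ptrunc p (int M) x)" by (rule ptrunc_den[OF p Q])
next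
  assume p: "1 < p" and Q: "Qb p k x"
  fix L M assume "M \<ge> nat L"
  then have "L \<le> int M" by simp
  then show "cr p L (ptrunc p L x) (ptrunc p (int M) x)" by (rule cr_sym[OF ptrunc_cr[OF p Q]])
qed

lemma apx_ev:
  assumes p: "1 < p" and Q: "Qb p k x" and A: "apx p x q"
  shows "\<exists>M0. \<forall>M\<ge>M0. cr p L (ptrunc p (int M) x) (q M)"
proof -
  obtain M0 where M0: "\<forall>M\<ge>M0. cr p L (ptrunc p L x) (q M)" using A unfolding apx_def by blast
  show ?thesis
  proof (intro exI allI impI)
    fix M assume M: "M \<ge> max M0 (nat L)"
    have "cr p L (ptrunc p (int M) x) (ptrunc p L x)" using M by (intro ptrunc_cr[OF p Q]) auto
    then show "cr p L (ptrunc p (int M) x) (q M)" using M0 M cr_trans by auto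
  qed
qed

lemma ev_and:
  assumes "\<exists>M0. \<forall>M\<ge>M0. P M" "\<exists>M0. \<forall>M\<ge>M0. Q M"
  shows "\<exists>M0::nat. \<forall>M\<ge>M0. P M \<and> Q M"
proof -
  obtain a b where "\<forall>M\<ge>a. P M" "\<forall>M\<ge>b. Q M" using assms by blast
  then show ?thesis by (intro exI[of _ "max a b"]) auto
qed

lemma padd_apx:
  assumes p: "1 < p" and Qx: "Qb p kx x" and Qy: "Qb p ky y" and Ax: "apx p x q" and Ay: "apx p y q'"
  shows "Qb p (max kx ky) (padd p x y)" and "apx p (padd p x y) (\<lambda>M. q M + q' M)"
proof -
  define s where "s = (\<lambda>M::nat. ptrunc p (int M) x + ptrunc p (int M) y)"
  have dn: "den p (max kx ky) (s M)" for M unfolding s_def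
    by (intro den_add den_mono[OF _ ptrunc_den[OF p Qx]] den_mono[OF _ ptrunc_den[OF p Qy]]) auto
  have stab: "cr p (int M - 0) (s M') (s M)" if "M \<le> M'" for M M'
    unfolding s_def using that by (auto intro!: cr_add ptrunc_cr[OF p Qx] ptrunc_cr[OF p Qy])
  have pe: "padd p x y = (\<lambda>j. THE c'. \<forall>\<^sub>F M in sequentially. pdigit p j (s M) = c')"
    unfolding padd_def s_def ..
  show "Qb p (max kx ky) (padd p x y)" unfolding pe by (rule gen(1)[OF p dn stab])
  show "apx p (padd p x y) (\<lambda>M. q M + q' M)"
    unfolding apx_def
  proof (intro conjI allI)
    obtain k1 k2 where "\<forall>M. den p k1 (q M)" "\<forall>M. den p k2 (q' M)" using Ax Ay unfolding apx_def by blast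
    then show "\<exists>k. \<forall>M. den p k (q M + q' M)"
      by (intro exI[of _ "max k1 k2"] allI den_add) (meson den_mono max.cobounded1 max.cobounded2)+
  next
    fix L
    have e1: "\<exists>M0. \<forall>M\<ge>M0. cr p L (ptrunc p L (padd p x y)) (s M)"
      unfolding pe by (rule gen(2)[OF p dn stab])
    have e2: "\<exists>M0. \<forall>M\<ge>M0. cr p L (ptrunc p (int M) x) (q M) \<and> cr p L (ptrunc p (int M) y) (q' M)"
      by (rule ev_and[OF apx_ev[OF p Qx Ax] apx_ev[OF p Qy Ay]])
    from ev_and[OF e1 e2] obtain M0 where M0: "\<forall>M\<ge>M0. cr p L (ptrunc p L (padd p x y)) (s M) \<and>
       cr p L (ptrunc p (int M) x) (q M) \<and> cr p L (ptrunc p (int M) y) (q' M)" by blast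
    show "\<exists>M0. \<forall>M\<ge>M0. cr p L (ptrunc p L (padd p x y)) (q M + q' M)"
    proof (intro exI allI impI)
      fix M assume "M \<ge> M0"
      then have h: "cr p L (ptrunc p L (padd p x y)) (s M)" "cr p L (ptrunc p (int M) x) (q M)"
        "cr p L (ptrunc p (int M) y) (q' M)" using M0 by auto
      have "cr p L (s M) (q M + q' M)" unfolding s_def using h(2,3) by (rule cr_add)
      then show "cr p L (ptrunc p L (padd p x y)) (q M + q' M)" using h(1) cr_trans by blast
    qed
  qed
qed


lemma pmul_apx:
  assumes p: "1 < p" and Qx: "Qb p kx x" and Qy: "Qb p ky y" and Ax: "apx p x q" and Ay: "apx p y q'"
  shows "Qb p (kx + ky) (pmul p x y)" and "apx p (pmul p x y) (\<lambda>M. q M * q' M)"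
proof -
  define s where "s = (\<lambda>M::nat. ptrunc p (int M) x * ptrunc p (int M) y)"
  have dn: "den p (kx + ky) (s M)" for M unfolding s_def
    by (rule den_mult[OF ptrunc_den[OF p Qx] ptrunc_den[OF p Qy]])
  have stab: "cr p (int M - int (kx + ky)) (s M') (s M)" if "M \<le> M'" for M M'
  proof -
    have a: "cr p (int M) (ptrunc p (int M') x) (ptrunc p (int M) x)" using that by (intro ptrunc_cr[OF p Qx]) auto
    have b: "cr p (int M) (ptrunc p (int M') y) (ptrunc p (int M) y)" using that by (intro ptrunc_cr[OF p Qy]) auto
    have a2: "cr p (int M - int ky) (ptrunc p (int M') y * ptrunc p (int M') x) (ptrunc p (int M') y * ptrunc p (int M) x)"
      by (rule cr_mult_den[OF p ptrunc_den[OF p Qy] a])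
    have b2: "cr p (int M - int kx) (ptrunc p (int M) x * ptrunc p (int M') y) (ptrunc p (int M) x * ptrunc p (int M) y)"
      by (rule cr_mult_den[OF p ptrunc_den[OF p Qx] b])
    have a3: "cr p (int M - int (kx + ky)) (s M') (ptrunc p (int M) x * ptrunc p (int M') y)"
      using cr_mono[OF p _ a2, of "int M - int (kx + ky)"] unfolding s_def by (simp add: mult.commute)
    have b3: "cr p (int M - int (kx + ky)) (ptrunc p (int M) x * ptrunc p (int M') y) (s M)"
      using cr_mono[OF p _ b2, of "int M - int (kx + ky)"] unfolding s_def by simp
    show ?thesis using cr_trans[OF a3 b3] .
  qed
  have pe: "pmul p x y = (\<lambda>j. THE c'. \<forall>\<^sub>F M in sequentially. pdigit p j (s M) = c')"
    unfolding pmul_def s_def ..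
  show "Qb p (kx + ky) (pmul p x y)" unfolding pe by (rule gen(1)[OF p dn stab])
  obtain k1 k2 where k12: "\<forall>M. den p k1 (q M)" "\<forall>M. den p k2 (q' M)" using Ax Ay unfolding apx_def by blast
  show "apx p (pmul p x y) (\<lambda>M. q M * q' M)"
    unfolding apx_def
  proof (intro conjI allI)
    show "\<exists>k. \<forall>M. den p k (q M * q' M)" using k12 by (intro exI[of _ "k1 + k2"] allI den_mult) auto
  next
    fix L
    have e1: "\<exists>M0. \<forall>M\<ge>M0. cr p L (ptrunc p L (pmul p x y)) (s M)"
      unfolding pe by (rule gen(2)[OF p dn stab])
    have e2: "\<exists>M0. \<forall>M\<ge>M0. cr p (L + int ky) (ptrunc p (int M) x) (q M) \<and> cr p (L + int k1) (ptrunc p (int M) y) (q' M)"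
      by (rule ev_and[OF apx_ev[OF p Qx Ax] apx_ev[OF p Qy Ay]])
    from ev_and[OF e1 e2] obtain M0 where M0: "\<forall>M\<ge>M0. cr p L (ptrunc p L (pmul p x y)) (s M) \<and>
       cr p (L + int ky) (ptrunc p (int M) x) (q M) \<and> cr p (L + int k1) (ptrunc p (int M) y) (q' M)" by blast
    show "\<exists>M0. \<forall>M\<ge>M0. cr p L (ptrunc p L (pmul p x y)) (q M * q' M)"
    proof (intro exI allI impI)
      fix M assume "M \<ge> M0"
      then have h: "cr p L (ptrunc p L (pmul p x y)) (s M)" "cr p (L + int ky) (ptrunc p (int M) x) (q M)"
        "cr p (L + int k1) (ptrunc p (int M) y) (q' M)" using M0 by auto
      have c1: "cr p L (ptrunc p (int M) y * ptrunc p (int M) x) (ptrunc p (int M) y * q M)"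
        using cr_mult_den[OF p ptrunc_den[OF p Qy] h(2)] by simp
      have c2: "cr p L (q M * ptrunc p (int M) y) (q M * q' M)"
        using cr_mult_den[OF p _ h(3), of k1 "q M"] k12 by simp
      have "cr p L (s M) (q M * q' M)"
        using cr_trans[OF c1 c2[unfolded mult.commute[of "q M"]]] unfolding s_def
        by (simp add: mult.commute)
      then show "cr p L (ptrunc p L (pmul p x y)) (q M * q' M)" using h(1) cr_trans by blast
    qed
  qed
qed

lemma pof_nat_eq: "1 < p \<Longrightarrow> pof_nat p r = (\<lambda>j. pdigit p j (real r))"
proof
  fix j assume p: "1 < p"
  show "pof_nat p r j = pdigit p j (real r)"
  proof (cases "j < 0")
    case True
    have e: "real p powi j = 1 / real p ^ nat (- j)"
    proof -
      have "real p powi j = 1 / real p powi (- j)" using power_int_minus_divide[of "real p" "-j"] by simp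
      also have "real p powi (- j) = real p ^ nat (- j)" using True by (simp add: power_int_nonneg_exp)
      finally show ?thesis .
    qed
    have "real r / real p powi j = real_of_int (int r * int p ^ nat (- j))"
      unfolding e by simp
    moreover have "int p dvd int r * int p ^ nat (- j)" using True by (simp add: dvd_power)
    ultimately show ?thesis unfolding pof_nat_def pdigit_def using True
      by (simp only: floor_of_int) simp
  next
    case False
    have "real p powi j = real (p ^ nat j)" using False by (simp add: power_int_nonneg_exp)
    then have "\<lfloor>real r / real p powi j\<rfloor> = int (r div p ^ nat j)" by (simp only: floor_divide_of_nat_eq)
    moreover have "nat (int (r div p ^ nat j) mod int p) = r div p ^ nat j mod p" by (metis nat_int of_nat_mod)
    ultimately show ?thesis unfolding pof_nat_def pdigit_def using False by simp
  qed
qed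

lemma pof_nat_apx:
  assumes p: "1 < p"
  shows "Qb p 0 (pof_nat p r)" and "apx p (pof_nat p r) (\<lambda>_. real r)"
proof -
  have d: "den p 0 (real r)" by (simp add: den_def)
  show "Qb p 0 (pof_nat p r)" unfolding pof_nat_eq[OF p] by (rule recon(1)[OF p d])
  show "apx p (pof_nat p r) (\<lambda>_. real r)" unfolding apx_def
    using d recon(2)[OF p d] unfolding pof_nat_eq[OF p] by blast
qed

lemma ppow_apx:
  assumes p: "1 < p" and Q: "Qb p 0 x" and A: "apx p x q"
  shows "Qb p 0 (ppow p x k) \<and> apx p (ppow p x k) (\<lambda>M. q M ^ k)"
proof (induction k)
  case 0
  show ?case using pof_nat_apx[OF p, of 1] by simp
next
  case (Suc k)
  then have "Qb p (0 + 0) (pmul p (ppow p x k) x)" "apx p (pmul p (ppow p x k) x) (\<lambda>M. q M ^ k * q M)"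
    using pmul_apx[OF p _ Q _ A] by auto
  then show ?case by (simp add: mult.commute)
qed

lemma zero_apx: "1 < p \<Longrightarrow> Qb p 0 (\<lambda>_. 0) \<and> apx p (\<lambda>_. 0) (\<lambda>_. 0)"
  unfolding Qb_def apx_def den_def ptrunc_def by simp

lemma peval_apx:
  assumes p: "1 < p" and Qa: "\<forall>l\<in>{1..n}. Qb p kA (a l)"
  shows "k \<le> n \<Longrightarrow> Qb p kA (peval p a k (pof_nat p r)) \<and>
    apx p (peval p a k (pof_nat p r)) (\<lambda>M. \<Sum>j\<in>{1..k}. ptrunc p (int M) (a j) * real r ^ j)"
proof (induction k)
  case 0
  show ?case using zero_apx[OF p] Qb_mono[of p 0 "\<lambda>_. 0" kA] by simp
next
  case (Suc k)
  have IH: "Qb p kA (peval p a k (pof_nat p r))"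
    "apx p (peval p a k (pof_nat p r)) (\<lambda>M. \<Sum>j\<in>{1..k}. ptrunc p (int M) (a j) * real r ^ j)"
    using Suc by auto
  have Qs: "Qb p kA (a (Suc k))" using Qa Suc.prems by auto
  have PPc: "Qb p 0 (ppow p (pof_nat p r) (Suc k)) \<and> apx p (ppow p (pof_nat p r) (Suc k)) (\<lambda>M. real r ^ Suc k)"
    by (rule ppow_apx[OF p pof_nat_apx(1)[OF p] pof_nat_apx(2)[OF p]])
  have PP: "Qb p 0 (ppow p (pof_nat p r) (Suc k))" "apx p (ppow p (pof_nat p r) (Suc k)) (\<lambda>M. real r ^ Suc k)"
    using PPc by blast+
  have T: "Qb p (kA + 0) (pmul p (a (Suc k)) (ppow p (pof_nat p r) (Suc k)))"
    "apx p (pmul p (a (Suc k)) (ppow p (pof_nat p r) (Suc k))) (\<lambda>M. ptrunc p (int M) (a (Suc k)) * real r ^ Suc k)"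
    using pmul_apx[OF p Qs PP(1) apx_self[OF p Qs] PP(2)] by auto
  have R: "Qb p (max kA (kA + 0)) (peval p a (Suc k) (pof_nat p r))"
    "apx p (peval p a (Suc k) (pof_nat p r)) (\<lambda>M. (\<Sum>j\<in>{1..k}. ptrunc p (int M) (a j) * real r ^ j) + ptrunc p (int M) (a (Suc k)) * real r ^ Suc k)"
    using padd_apx[OF p IH(1) T(1) IH(2) T(2)] by auto
  show ?case using R by (simp add: sum.cl_ivl_Suc)
qed


lemma cr_sum: "(\<And>j. j \<in> S \<Longrightarrow> cr p L (f j) (g j)) \<Longrightarrow> cr p L (\<Sum>j\<in>S. f j) (\<Sum>j\<in>S. g j)"
  unfolding cr_def
proof -
  assume h: "\<And>j. j \<in> S \<Longrightarrow> (f j - g j) / real p powi L \<in> \<int>"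
  have "(\<Sum>j\<in>S. f j) - (\<Sum>j\<in>S. g j) = (\<Sum>j\<in>S. f j - g j)" by (simp add: sum_subtractf)
  then have "((\<Sum>j\<in>S. f j) - (\<Sum>j\<in>S. g j)) / real p powi L = (\<Sum>j\<in>S. (f j - g j) / real p powi L)"
    by (simp add: sum_divide_distrib)
  also have "\<dots> \<in> \<int>" using h by (intro Ints_sum) auto
  finally show "((\<Sum>j\<in>S. f j) - (\<Sum>j\<in>S. g j)) / real p powi L \<in> \<int>" .
qed

lemma LEASTv:
  assumes Q: "Qb p k d" and nz: "d \<noteq> (\<lambda>_. 0)"
  shows "\<exists>v. d v \<noteq> 0 \<and> (\<forall>y<v. d y = 0) \<and> (LEAST j. d j \<noteq> 0) = v \<and> - int k \<le> v"
proof -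
  obtain y0 where y0: "d y0 \<noteq> 0" using nz by auto
  define P where "P = (\<lambda>n::nat. d (int n - int k) \<noteq> 0)"
  have "y0 \<ge> - int k" using Q y0 unfolding Qb_def by (meson not_less)
  then have Py: "P (nat (y0 + int k))" unfolding P_def using y0 by simp
  define n0 where "n0 = (LEAST n. P n)"
  have Pn0: "P n0" unfolding n0_def by (rule LeastI[of P, OF Py])
  define v where "v = int n0 - int k"
  have dv: "d v \<noteq> 0" using Pn0 unfolding P_def v_def .
  have below: "\<forall>y<v. d y = 0"
  proof (intro allI impI)
    fix y assume "y < v"
    show "d y = 0"
    proof (rule ccontr)
      assume "d y \<noteq> 0"
      then have "y \<ge> - int k" using Q unfolding Qb_def by (meson not_less)
      then have "P (nat (y + int k))" unfolding P_def using `d y \<noteq> 0` by simp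
      then have "n0 \<le> nat (y + int k)" unfolding n0_def by (rule Least_le)
      then show False using `y < v` `y \<ge> - int k` unfolding v_def by simp
    qed
  qed
  have "(LEAST j. d j \<noteq> 0) = v"
  proof (rule Least_equality)
    show "d v \<noteq> 0" by (rule dv)
    fix y assume "d y \<noteq> 0" then show "v \<le> y" using below by (meson not_less)
  qed
  then show ?thesis using dv below unfolding v_def by auto
qed

lemma pabs_le_iff:
  assumes p: "1 < p" and Q: "Qb p k d"
  shows "pabs p d \<le> real p powi (- L) \<longleftrightarrow> (\<forall>i<L. d i = 0)"
proof (cases "d = (\<lambda>_. 0)")
  case True then show ?thesis unfolding pabs_def using p by simp
next
  case False
  obtain v where v: "d v \<noteq> 0" "\<forall>y<v. d y = 0" "(LEAST j. d j \<noteq> 0) = v" using LEASTv[OF Q False] by blast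
  have pa: "pabs p d = real p powi (- v)" unfolding pabs_def using False v(3) by simp
  have "real p powi (- v) \<le> real p powi (- L) \<longleftrightarrow> - v \<le> - L"
  proof
    assume "real p powi (- v) \<le> real p powi (- L)"
    then show "- v \<le> - L"
    proof (rule contrapos_pp)
      assume "\<not> - v \<le> - L"
      then show "\<not> real p powi (- v) \<le> real p powi (- L)"
        using power_int_strict_increasing[of "- L" "- v" "real p"] p by simp
    qed
  next
    assume "- v \<le> - L" then show "real p powi (- v) \<le> real p powi (- L)"
      using power_int_increasing[of "- v" "- L" "real p"] p by simp
  qed
  also have "\<dots> \<longleftrightarrow> (\<forall>i<L. d i = 0)"
  proof
    assume "- v \<le> - L" then show "\<forall>i<L. d i = 0" using v(2) by auto
  next
    assume "\<forall>i<L. d i = 0" then show "- v \<le> - L" using v(1) by (meson neg_le_iff_le not_less)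
  qed
  finally show ?thesis unfolding pa .
qed

lemma pabs_pos:
  assumes p: "1 < p" and Q: "Qb p k d" and nz: "d \<noteq> (\<lambda>_. 0)"
  shows "\<exists>v. pabs p d = real p powi (- v) \<and> - int k \<le> v"
proof -
  obtain v where v: "(LEAST j. d j \<noteq> 0) = v" "- int k \<le> v" using LEASTv[OF Q nz] by blast
  then show ?thesis unfolding pabs_def using nz by auto
qed

lemma Qp_Qb: "d \<in> Qp p \<Longrightarrow> \<exists>k. Qb p k d"
proof -
  assume "d \<in> Qp p"
  then obtain k0 where "\<forall>j. d j < p" "\<forall>j<k0. d j = 0" unfolding Qp_def by blast
  then have "Qb p (nat (- k0)) d" unfolding Qb_def by auto
  then show ?thesis by blast
qed

lemma Qb_all:
  fixes n :: nat and a :: "nat \<Rightarrow> padic"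
  assumes "\<forall>l\<in>{1..n}. a l \<in> Qp p"
  shows "\<exists>k. \<forall>l\<in>{1..n}. Qb p k (a l)"
  using assms
proof (induction n)
  case 0 then show ?case by simp
next
  case (Suc n)
  then obtain k where k: "\<forall>l\<in>{1..n}. Qb p k (a l)" by auto
  have "a (Suc n) \<in> Qp p" using Suc.prems by simp
  then obtain k' where k': "Qb p k' (a (Suc n))" using Qp_Qb by blast
  have "\<forall>l\<in>{1..Suc n}. Qb p (max k k') (a l)"
  proof
    fix l assume "l \<in> {1..Suc n}"
    then have "l \<in> {1..n} \<or> l = Suc n" by auto
    then show "Qb p (max k k') (a l)"
    proof
      assume "l \<in> {1..n}" then have "Qb p k (a l)" using k by blast
      then show ?thesis by (rule Qb_mono) simp
    next
      assume "l = Suc n" then show ?thesis using Qb_mono[OF k', of "max k k'"] by simp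
    qed
  qed
  then show ?case by blast
qed

lemma periodic_sum:
  fixes f :: "nat \<Rightarrow> complex"
  assumes q: "q > 0" and per: "\<And>r. f (r + q) = f r"
  shows "(\<Sum>r<q * c. f r) = of_nat c * (\<Sum>r<q. f r)"
proof -
  have per2: "f (y + q * u) = f y" for y u
  proof (induction u)
    case 0 then show ?case by simp
  next
    case (Suc u)
    have "f (y + q * Suc u) = f ((y + q * u) + q)" by (simp add: algebra_simps)
    also have "\<dots> = f (y + q * u)" by (rule per)
    finally show ?case using Suc by simp
  qed
  have "(\<Sum>r<q * c. f r) = (\<Sum>y<q. \<Sum>u<c. f (y + q * u))" by (rule sum_split_mod[OF q])
  also have "\<dots> = (\<Sum>y<q. of_nat c * f y)" using per2 by simp
  finally show ?thesis by (simp add: sum_distrib_left)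
qed

lemma ev0_period:
  assumes "p > 0"
  shows "ee p k (ev0 A n (x + int p ^ k)) = ee p k (ev0 A n x)"
proof -
  have "ev0 A n (x + int p ^ k) = (\<Sum>i\<le>n. tay A n x i * (int p ^ k) ^ i)" by (rule taylor)
  also have "\<dots> = tay A n x 0 + (\<Sum>i<n. tay A n x (Suc i) * (int p ^ k) ^ Suc i)"
    by (subst sum.atMost_shift) simp
  also have "(\<Sum>i<n. tay A n x (Suc i) * (int p ^ k) ^ Suc i) = int p ^ k * (\<Sum>i<n. tay A n x (Suc i) * (int p ^ k) ^ i)"
    by (simp add: sum_distrib_left mult_ac)
  finally have "ev0 A n (x + int p ^ k) = ev0 A n x + int p ^ k * (\<Sum>i<n. tay A n x (Suc i) * (int p ^ k) ^ i)"
    by (simp add: tay0)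
  then show ?thesis by (simp add: ee_add ee_mult[OF assms])
qed

lemma int_div_pow_Ints:
  fixes z :: int and p e :: nat
  assumes "p > 0"
  shows "real_of_int z / real p ^ e \<in> \<int> \<longleftrightarrow> int p ^ e dvd z"
proof
  assume "real_of_int z / real p ^ e \<in> \<int>"
  then obtain w where w: "real_of_int z / real p ^ e = of_int w" by (auto elim: Ints_cases)
  then have "real_of_int z = real_of_int (int p ^ e * w)" using assms by (simp add: field_simps)
  then have "z = int p ^ e * w" by (simp only: of_int_eq_iff)
  then show "int p ^ e dvd z" by simp
next
  assume "int p ^ e dvd z"
  then obtain w where "z = int p ^ e * w" by blast
  then have "real_of_int z / real p ^ e = of_int w" using assms by simp
  then show "real_of_int z / real p ^ e \<in> \<int>" by simp
qed

lemma cis_int_shift: "x - y \<in> \<int> \<Longrightarrow> cis (2 * pi * x) = cis (2 * pi * y)"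
proof -
  assume "x - y \<in> \<int>"
  then have "cis (2 * pi * (x - y)) = 1" by (rule cis_multiple_2pi)
  moreover have "cis (2 * pi * x) = cis (2 * pi * y) * cis (2 * pi * (x - y))"
    by (simp add: cis_mult algebra_simps)
  ultimately show ?thesis by simp
qed


lemma integrand:
  assumes p: "1 < p" and Qa: "\<forall>l\<in>{1..n}. Qb p kA (a l)"
    and A: "\<forall>j\<in>{1..n}. ptrunc p 0 (a j) * real p ^ kA = of_int (A j)" and A0: "A 0 = 0"
  shows "pchi p (peval p a n (pof_nat p r)) = ee p kA (ev0 A n (int r))"
proof -
  define d where "d = peval p a n (pof_nat p r)"
  have ap: "apx p d (\<lambda>M. \<Sum>j\<in>{1..n}. ptrunc p (int M) (a j) * real r ^ j)"
    using peval_apx[OF p Qa, of n r] unfolding d_def by simp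
  then obtain M0 where M0: "\<forall>M\<ge>M0. cr p 0 (ptrunc p 0 d) (\<Sum>j\<in>{1..n}. ptrunc p (int M) (a j) * real r ^ j)"
    unfolding apx_def by blast
  have c1: "cr p 0 (ptrunc p 0 d) (\<Sum>j\<in>{1..n}. ptrunc p (int M0) (a j) * real r ^ j)" using M0 by simp
  have c2: "cr p 0 (\<Sum>j\<in>{1..n}. ptrunc p (int M0) (a j) * real r ^ j) (\<Sum>j\<in>{1..n}. ptrunc p 0 (a j) * real r ^ j)"
  proof (rule cr_sum)
    fix j assume j: "j \<in> {1..n}"
    have cc: "cr p 0 (ptrunc p (int M0) (a j)) (ptrunc p 0 (a j))" using Qa j by (intro ptrunc_cr[OF p]) auto
    have "cr p 0 (real r ^ j * ptrunc p (int M0) (a j)) (real r ^ j * ptrunc p 0 (a j))"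
      by (rule cr_mult_int[OF p _ cc]) simp
    then show "cr p 0 (ptrunc p (int M0) (a j) * real r ^ j) (ptrunc p 0 (a j) * real r ^ j)"
      by (simp add: mult.commute)
  qed
  have c3: "ptrunc p 0 d - (\<Sum>j\<in>{1..n}. ptrunc p 0 (a j) * real r ^ j) \<in> \<int>"
    using cr_trans[OF c1 c2] unfolding cr_0 .
  have ev: "(\<Sum>j\<in>{1..n}. ptrunc p 0 (a j) * real r ^ j) = real_of_int (ev0 A n (int r)) / real p ^ kA"
  proof -
    have "{..n} = insert 0 {1..n}" by auto
    then have "ev0 A n (int r) = (\<Sum>j\<in>{1..n}. A j * int r ^ j)" unfolding ev0_def using A0 by simp
    then have "real_of_int (ev0 A n (int r)) / real p ^ kA = (\<Sum>j\<in>{1..n}. (real_of_int (A j) / real p ^ kA) * real r ^ j)"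
      by (simp add: sum_divide_distrib)
    also have "\<dots> = (\<Sum>j\<in>{1..n}. ptrunc p 0 (a j) * real r ^ j)"
    proof (rule sum.cong[OF refl])
      fix j assume "j \<in> {1..n}"
      then have "ptrunc p 0 (a j) = real_of_int (A j) / real p ^ kA" using A p by (simp add: field_simps)
      then show "real_of_int (A j) / real p ^ kA * real r ^ j = ptrunc p 0 (a j) * real r ^ j" by simp
    qed
    finally show ?thesis by simp
  qed
  have "pchi p d = cis (2 * pi * ptrunc p 0 d)" unfolding pchi_def ptrunc_def by simp
  also have "\<dots> = cis (2 * pi * (real_of_int (ev0 A n (int r)) / real p ^ kA))"
    using c3 unfolding ev by (rule cis_int_shift)
  also have "\<dots> = ee p kA (ev0 A n (int r))" unfolding ee_def by simp
  finally show ?thesis unfolding d_def .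
qed

lemma pint_eq:
  assumes p: "1 < p" and Qa: "\<forall>l\<in>{1..n}. Qb p kA (a l)"
    and A: "\<forall>j\<in>{1..n}. ptrunc p 0 (a j) * real p ^ kA = of_int (A j)" and A0: "A 0 = 0"
  shows "pint p (\<lambda>x. pchi p (peval p a n x)) = Ssum p kA A n / of_nat (p ^ kA)"
proof -
  define f where "f = (\<lambda>r::nat. ee p kA (ev0 A n (int r)))"
  have per: "f (r + p ^ kA) = f r" for r
    unfolding f_def using ev0_period[of p kA A n "int r"] p by simp
  have "\<forall>\<^sub>F N in sequentially. (\<Sum>r<p ^ N. pchi p (peval p a n (pof_nat p r))) / of_nat (p ^ N) = Ssum p kA A n / of_nat (p ^ kA)"
    unfolding eventually_sequentially
  proof (intro exI allI impI)
    fix N assume N: "N \<ge> kA"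
    have pN: "p ^ N = p ^ kA * p ^ (N - kA)" using N by (simp add: power_add[symmetric])
    have "(\<Sum>r<p ^ N. pchi p (peval p a n (pof_nat p r))) = (\<Sum>r<p ^ kA * p ^ (N - kA). f r)"
      unfolding f_def pN using integrand[OF p Qa A A0] by simp
    also have "\<dots> = of_nat (p ^ (N - kA)) * Ssum p kA A n"
      unfolding Ssum_def f_def[symmetric] by (rule periodic_sum) (use p per in auto)
    finally show "(\<Sum>r<p ^ N. pchi p (peval p a n (pof_nat p r))) / of_nat (p ^ N) = Ssum p kA A n / of_nat (p ^ kA)"
      unfolding pN using p by (simp add: field_simps)
  qed
  then have "(\<lambda>N. (\<Sum>r<p ^ N. pchi p (peval p a n (pof_nat p r))) / of_nat (p ^ N)) \<longlonglongrightarrow> Ssum p kA A n / of_nat (p ^ kA)"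
    by (rule tendsto_eventually)
  then show ?thesis unfolding pint_def by (rule limI)
qed


lemma xj_apx:
  assumes p: "1 < p" and Q: "Qb p kA aj"
  shows "Qb p kA (pmul p (pof_nat p j) aj)" and "apx p (pmul p (pof_nat p j) aj) (\<lambda>M. real j * ptrunc p (int M) aj)"
  using pmul_apx[OF p pof_nat_apx(1)[OF p] Q pof_nat_apx(2)[OF p] apx_self[OF p Q]] by auto

lemma char:
  assumes p: "1 < p" and Q: "Qb p kA aj"
    and A: "ptrunc p 0 aj * real p ^ kA = of_int Aj"
    and L: "0 \<le> L'" "L' \<le> int kA"
  shows "pabs p (pmul p (pof_nat p j) aj) \<le> real p powi L' \<longleftrightarrow> int p ^ nat (int kA - L') dvd int j * Aj"
proof -
  define x where "x = pmul p (pof_nat p j) aj"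
  have Qx: "Qb p kA x" and ax: "apx p x (\<lambda>M. real j * ptrunc p (int M) aj)"
    unfolding x_def using xj_apx[OF p Q] by auto
  have "pabs p x \<le> real p powi L' \<longleftrightarrow> (\<forall>i < - L'. x i = 0)"
    using pabs_le_iff[OF p Qx, of "- L'"] by simp
  also have "\<dots> \<longleftrightarrow> ptrunc p (- L') x = 0" using ptrunc_eq0_iff[OF Qx p] by simp
  also have "\<dots> \<longleftrightarrow> cr p (- L') (ptrunc p (- L') x) 0" using cr_ptrunc0_iff[OF Qx p] by simp
  also have "\<dots> \<longleftrightarrow> cr p (- L') (real j * ptrunc p 0 aj) 0"
  proof -
    obtain M0 where M0: "cr p (- L') (ptrunc p (- L') x) (real j * ptrunc p (int M0) aj)"
      using ax unfolding apx_def by blast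
    have "cr p 0 (ptrunc p (int M0) aj) (ptrunc p 0 aj)" by (rule ptrunc_cr[OF p Q]) simp
    then have "cr p 0 (real j * ptrunc p (int M0) aj) (real j * ptrunc p 0 aj)"
      by (rule cr_mult_int[OF p, rotated]) simp
    then have "cr p (- L') (real j * ptrunc p (int M0) aj) (real j * ptrunc p 0 aj)"
      by (rule cr_mono[OF p, rotated]) (use L in simp)
    then have key: "cr p (- L') (ptrunc p (- L') x) (real j * ptrunc p 0 aj)" using M0 cr_trans by blast
    show ?thesis
    proof
      assume "cr p (- L') (ptrunc p (- L') x) 0"
      then show "cr p (- L') (real j * ptrunc p 0 aj) 0" using key cr_sym cr_trans by blast
    next
      assume "cr p (- L') (real j * ptrunc p 0 aj) 0"
      then show "cr p (- L') (ptrunc p (- L') x) 0" using key cr_trans by blast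
    qed
  qed
  also have "\<dots> \<longleftrightarrow> real_of_int (int j * Aj) / real p ^ nat (int kA - L') \<in> \<int>"
  proof -
    define e1 where "e1 = nat L'"
    define e2 where "e2 = nat (int kA - L')"
    have kk: "kA = e1 + e2" unfolding e1_def e2_def using L by simp
    have pa: "ptrunc p 0 aj = real_of_int Aj / real p ^ kA" using A p by (simp add: field_simps)
    have pw: "real p powi (- L') = 1 / real p ^ e1"
      unfolding e1_def using L power_int_minus_divide[of "real p" L'] by (simp add: power_int_nonneg_exp)
    have "(real j * ptrunc p 0 aj - 0) / real p powi (- L') = real_of_int (int j * Aj) / real p ^ e2"
      unfolding pa pw kk using p by (simp add: power_add field_simps)
    then show ?thesis unfolding cr_def e2_def by simp
  qed
  also have "\<dots> \<longleftrightarrow> int p ^ nat (int kA - L') dvd int j * Aj"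
    by (rule int_div_pow_Ints) (use p in simp)
  finally show ?thesis unfolding x_def .
qed

lemma pow_gt_self: "1 < p \<Longrightarrow> l < (p::nat) ^ l"
proof (induction l)
  case 0 then show ?case by simp
next
  case (Suc l)
  then have "Suc l \<le> p ^ l" by simp
  also have "p ^ l < p ^ Suc l" using Suc.prems by simp
  finally show ?case .
qed

lemma nonzero:
  assumes pp: "prime p" and Q: "Qb p kA aj" and nz: "aj \<noteq> (\<lambda>_. 0)" and l: "l \<ge> 1"
  shows "pmul p (pof_nat p l) aj \<noteq> (\<lambda>_. 0)"
proof
  have p: "1 < p" using pp prime_gt_1_nat by blast
  assume x0: "pmul p (pof_nat p l) aj = (\<lambda>_. 0)"
  have ax: "apx p (pmul p (pof_nat p l) aj) (\<lambda>M. real l * ptrunc p (int M) aj)" using xj_apx[OF p Q] by auto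
  have allL: "cr p L (real l * ptrunc p L aj) 0" for L
  proof -
    obtain M0 where M0: "\<forall>M\<ge>M0. cr p L (ptrunc p L (\<lambda>_. 0)) (real l * ptrunc p (int M) aj)"
      using ax unfolding apx_def x0 by blast
    define M where "M = max M0 (nat L)"
    have "cr p L (ptrunc p L (\<lambda>_. 0)) (real l * ptrunc p (int M) aj)" using M0 unfolding M_def by simp
    then have c1: "cr p L (real l * ptrunc p (int M) aj) 0" unfolding ptrunc_def by (simp add: cr_sym)
    have "cr p L (ptrunc p (int M) aj) (ptrunc p L aj)" by (rule ptrunc_cr[OF p Q]) (simp add: M_def)
    then have "cr p L (real l * ptrunc p (int M) aj) (real l * ptrunc p L aj)" by (rule cr_mult_int[OF p, rotated]) simp
    then show ?thesis using c1 cr_sym cr_trans by blast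
  qed
  obtain v where v: "aj v \<noteq> 0" "\<forall>y<v. aj y = 0" using LEASTv[OF Q nz] by blast
  define L where "L = v + 1 + int l"
  have tv: "ptrunc p (v + 1) aj = real (aj v) * real p powi v"
  proof -
    have "{j. j < v + 1 \<and> aj j \<noteq> 0} = {v}" using v by (auto simp: le_less)
    then show ?thesis unfolding ptrunc_def by simp
  qed
  have "cr p (v + 1) (ptrunc p L aj) (ptrunc p (v + 1) aj)" by (rule ptrunc_cr[OF p Q]) (simp add: L_def)
  then obtain z1 where z1: "(ptrunc p L aj - real (aj v) * real p powi v) / real p powi (v + 1) = of_int z1"
    unfolding cr_def tv by (auto elim: Ints_cases)
  obtain w where w: "(real l * ptrunc p L aj - 0) / real p powi L = of_int w"
    using allL[of L] unfolding cr_def by (auto elim: Ints_cases)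
  have P0: "real p powi v \<noteq> 0" using p by simp
  have pv1: "real p powi (v + 1) = real p powi v * real p" using p by (simp add: power_int_add_1)
  have pL: "real p powi L = real p powi v * real p ^ (l + 1)"
  proof -
    have eL: "L = v + int (l + 1)" unfolding L_def by simp
    have "real p powi (v + int (l + 1)) = real p powi v * real p powi int (l + 1)"
      using p by (intro power_int_add) simp
    then show ?thesis unfolding eL power_int_of_nat .
  qed
  have D0: "real p powi v * real p \<noteq> 0" using P0 p by simp
  have "ptrunc p L aj - real (aj v) * real p powi v = of_int z1 * (real p powi v * real p)"
    using z1 D0 unfolding pv1 by (simp add: divide_eq_eq)
  then have e1: "ptrunc p L aj = real p powi v * (real (aj v) + real p * of_int z1)"
    by (simp add: algebra_simps)
  have "real l * ptrunc p L aj = of_int w * real p powi L" using w P0 p by (simp add: field_simps)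
  then have "real p powi v * (real l * (real (aj v) + real p * of_int z1)) = real p powi v * (of_int w * real p ^ (l + 1))"
    unfolding e1 pL by (simp add: mult_ac)
  then have "real l * (real (aj v) + real p * of_int z1) = of_int w * real p ^ (l + 1)" using P0 p by simp
  then have "real_of_int (int l * (int (aj v) + int p * z1)) = real_of_int (w * int p ^ (l + 1))" by simp
  then have eqi: "int l * (int (aj v) + int p * z1) = w * int p ^ (l + 1)" by (simp only: of_int_eq_iff)
  have ndv: "\<not> int p dvd int (aj v) + int p * z1"
  proof
    assume "int p dvd int (aj v) + int p * z1"
    then have "int p dvd int (aj v)" by (simp add: dvd_add_left_iff)
    then have "p dvd aj v" by simp
    moreover have "aj v < p" using Q unfolding Qb_def by blast
    ultimately show False using v(1) by (simp add: nat_dvd_not_less)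
  qed
  have "coprime (int p ^ (l + 1)) (int (aj v) + int p * z1)"
    using ndv pp by (simp add: prime_imp_coprime coprime_power_left_iff)
  moreover have "int p ^ (l + 1) dvd int l * (int (aj v) + int p * z1)" unfolding eqi by simp
  ultimately have "int p ^ (l + 1) dvd int l" using coprime_dvd_mult_left_iff by blast
  then have "p ^ (l + 1) dvd l" by (metis of_nat_dvd_iff of_nat_power)
  then have "p ^ (l + 1) \<le> l" using l by (simp add: dvd_imp_le)
  moreover have "l < p ^ (l + 1)" using pow_gt_self[OF p, of "l+1"] by simp
  ultimately show False by simp
qed


lemma rhs_eq:
  assumes p: "1 < p" and m: "m \<ge> 1"
  shows "real p ^ m / (real p powi K) powr (1 / real m) = real p powr (real m - real_of_int K / real m)"
proof -
  have p0: "real p > 0" using p by simp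
  have "real p powi K = real p powr (real_of_int K)" using p0 by (simp add: powr_real_of_int')
  then have "(real p powi K) powr (1 / real m) = real p powr (real_of_int K / real m)"
    by (simp add: powr_powr)
  moreover have "real p ^ m = real p powr (real m)" using p0 by (simp add: powr_realpow)
  ultimately show ?thesis by (simp add: powr_diff)
qed

theorem mainTheorem1:
  fixes p n :: nat and a :: "nat \<Rightarrow> padic"
  assumes "prime p" and "n \<ge> 1"
    and "\<forall>l\<in>{1..n}. a l \<in> Qp p"
    and "\<exists>l\<in>{1..n}. a l \<noteq> (\<lambda>_. 0)"
  defines "m \<equiv> Max {l\<in>{1..n}. \<forall>j\<in>{1..n}. j \<noteq> l \<longrightarrow>
             pabs p (pmul p (pof_nat p j) (a j)) \<le> pabs p (pmul p (pof_nat p l) (a l))}"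
  shows "cmod (pint p (\<lambda>x. pchi p (peval p a n x)))
           \<le> real p ^ m / (pabs p (pmul p (pof_nat p m) (a m))) powr (1 / real m)"
proof -
  note pp = assms(1)
  have p: "1 < p" using pp prime_gt_1_nat by blast
  obtain kA where Qa: "\<forall>l\<in>{1..n}. Qb p kA (a l)" using Qb_all[OF assms(3)] by blast
  define A where "A = (\<lambda>j. if j = 0 then 0 else \<lfloor>ptrunc p 0 (a j) * real p ^ kA\<rfloor>)"
  have Aeq: "\<forall>j\<in>{1..n}. ptrunc p 0 (a j) * real p ^ kA = of_int (A j)"
  proof
    fix j assume j: "j \<in> {1..n}"
    have "den p kA (ptrunc p 0 (a j))" using Qa j by (intro ptrunc_den[OF p]) auto
    then obtain z where z: "ptrunc p 0 (a j) * real p ^ kA = of_int z" unfolding den_def by (auto elim: Ints_cases)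
    then show "ptrunc p 0 (a j) * real p ^ kA = of_int (A j)" unfolding A_def using j by simp
  qed
  have A0: "A 0 = 0" unfolding A_def by simp
  define x where "x = (\<lambda>j. pmul p (pof_nat p j) (a j))"
  have Qx: "Qb p kA (x j)" if "j \<in> {1..n}" for j
    unfolding x_def using xj_apx(1)[OF p, of kA "a j" j] Qa that by simp
  have pint: "pint p (\<lambda>x. pchi p (peval p a n x)) = Ssum p kA A n / of_nat (p ^ kA)"
    by (rule pint_eq[OF p Qa Aeq A0])
  have cm: "cmod (pint p (\<lambda>x. pchi p (peval p a n x))) = cmod (Ssum p kA A n) / real p ^ kA"
    unfolding pint by (simp add: norm_divide norm_power)
  define Sset where "Sset = {l\<in>{1..n}. \<forall>j\<in>{1..n}. j \<noteq> l \<longrightarrow> pabs p (x j) \<le> pabs p (x l)}"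
  have m_eq: "m = Max Sset" unfolding m_def Sset_def x_def ..
  have finS: "finite Sset" unfolding Sset_def by simp
  define \<mu> where "\<mu> = Max ((\<lambda>j. pabs p (x j)) ` {1..n})"
  have "\<mu> \<in> (\<lambda>j. pabs p (x j)) ` {1..n}" unfolding \<mu>_def using assms(2) by (intro Max_in) auto
  then obtain l0 where l0: "l0 \<in> {1..n}" "pabs p (x l0) = \<mu>" by blast
  have l0max: "\<forall>j\<in>{1..n}. pabs p (x j) \<le> pabs p (x l0)" unfolding l0(2) \<mu>_def by simp
  have "l0 \<in> Sset" unfolding Sset_def using l0 l0max by simp
  then have Sne: "Sset \<noteq> {}" by blast
  have mS: "m \<in> Sset" unfolding m_eq using finS Sne by (rule Max_in)
  have m1: "1 \<le> m" "m \<le> n" using mS unfolding Sset_def by auto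
  have mmax: "\<forall>j\<in>{1..n}. pabs p (x j) \<le> pabs p (x m)" using mS unfolding Sset_def by auto
  have mgt: "\<forall>j\<in>{m<..n}. pabs p (x j) < pabs p (x m)"
  proof
    fix j assume j: "j \<in> {m<..n}"
    have "j \<notin> Sset"
    proof
      assume "j \<in> Sset" then have "j \<le> m" unfolding m_eq using finS by simp
      then show False using j by simp
    qed
    then obtain j' where j': "j' \<in> {1..n}" "j' \<noteq> j" "\<not> pabs p (x j') \<le> pabs p (x j)"
      unfolding Sset_def using j m1 by auto
    then show "pabs p (x j) < pabs p (x m)" using mmax by force
  qed
  obtain l1 where l1: "l1 \<in> {1..n}" "a l1 \<noteq> (\<lambda>_. 0)" using assms(4) by blast
  have "Qb p kA (a l1)" using Qa l1(1) by blast
  then have "x l1 \<noteq> (\<lambda>_. 0)" unfolding x_def using nonzero[OF pp _ l1(2), of kA l1] l1(1) by auto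
  then obtain v1 where "pabs p (x l1) = real p powi (- v1)" using pabs_pos[OF p Qx[OF l1(1)]] by blast
  then have "pabs p (x l1) > 0" using p by simp
  then have pm_pos: "pabs p (x m) > 0" using mmax l1(1) by force
  then have xm0: "x m \<noteq> (\<lambda>_. 0)" unfolding pabs_def by auto
  obtain vm where vm: "pabs p (x m) = real p powi (- vm)" "- int kA \<le> vm"
    using pabs_pos[OF p Qx xm0] m1 by auto
  define K where "K = - vm"
  have Kk: "K \<le> int kA" unfolding K_def using vm by simp
  have pxm: "pabs p (x m) = real p powi K" unfolding K_def using vm by simp
  have rhs: "real p ^ m / (pabs p (pmul p (pof_nat p m) (a m))) powr (1 / real m)
      = real p powr (real m - real_of_int K / real m)"
    using pxm rhs_eq[OF p m1(1)] unfolding x_def by simp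
  have normS: "cmod (Ssum p kA A n) \<le> real p ^ kA * real p powr (real m - real_of_int K / real m)"
  proof (cases "real_of_int K \<le> real m * real m")
    case True
    have "real m - real_of_int K / real m \<ge> 0" using True m1 by (simp add: field_simps)
    then have "real p powr (real m - real_of_int K / real m) \<ge> 1" using p by (intro ge_one_powr_ge_zero) auto
    then have "real p ^ kA * 1 \<le> real p ^ kA * real p powr (real m - real_of_int K / real m)"
      by (intro mult_left_mono) auto
    then show ?thesis using Ssum_triv[of p kA A n] by simp
  next
    case False
    have r1: "1 \<le> real m" using m1 by simp
    then have "1 \<le> real m * real m" using mult_mono[OF r1 r1] by simp
    then have "real_of_int K > 1" using False by simp
    then have K1: "K \<ge> 1" by simp
    define t where "t = nat (int kA - K)"
    have tK: "int t = int kA - K" unfolding t_def using Kk by simp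
    have H: "Hyp p A n m t" unfolding Hyp_def
    proof (intro conjI ballI)
      show "1 \<le> m" "m \<le> n" by (rule m1(1), rule m1(2))
    next
      fix j assume j: "j \<in> {1..n}"
      have "pabs p (x j) \<le> real p powi K" using mmax j pxm by simp
      then show "int p ^ t dvd int j * A j"
        using char[OF p _ _ _ Kk, of "a j" "A j" j] Qa Aeq j K1 unfolding x_def t_def by simp
    next
      show "\<not> int p ^ (t + 1) dvd int m * A m"
      proof
        assume dv: "int p ^ (t + 1) dvd int m * A m"
        have e: "nat (int kA - (K - 1)) = t + 1" unfolding t_def using Kk by simp
        have "pabs p (x m) \<le> real p powi (K - 1)"
          using char[OF p _ _ _ _, of kA "a m" "A m" "K - 1" m] Qa Aeq m1 K1 Kk dv e unfolding x_def by simp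
        moreover have "real p powi (K - 1) < real p powi K" using p by (intro power_int_strict_increasing) auto
        ultimately show False using pxm by simp
      qed
    next
      fix j assume j: "j \<in> {m<..n}"
      have jn: "j \<in> {1..n}" using j m1 by auto
      have lt: "pabs p (x j) < real p powi K" using mgt j pxm by simp
      have le: "pabs p (x j) \<le> real p powi (K - 1)"
      proof (cases "x j = (\<lambda>_. 0)")
        case True then show ?thesis unfolding pabs_def using p by simp
      next
        case False
        obtain v where v: "pabs p (x j) = real p powi (- v)" using pabs_pos[OF p Qx[OF jn] False] by blast
        have "- v < K" using power_int_le_imp_less_exp[of "real p" "- v" K] lt v p K1 by simp
        then have "- v \<le> K - 1" by simp
        then show ?thesis unfolding v using p by (intro power_int_increasing) auto
      qed
      have e: "nat (int kA - (K - 1)) = t + 1" unfolding t_def using Kk by simp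
      show "int p ^ (t + 1) dvd int j * A j"
        using char[OF p _ _ _ _, of kA "a j" "A j" "K - 1" j] Qa Aeq jn K1 Kk le e unfolding x_def by simp
    qed
    have "real t = real_of_int (int t)" by simp
    also have "\<dots> = real_of_int (int kA - K)" by (simp only: tK)
    also have "\<dots> = real kA - real_of_int K" by simp
    finally have "real kA - real t = real_of_int K" by simp
    then show ?thesis using core[OF pp H, of kA] by simp
  qed
  have "cmod (pint p (\<lambda>x. pchi p (peval p a n x))) \<le> real p powr (real m - real_of_int K / real m)"
    unfolding cm using normS p by (simp add: divide_le_eq mult.commute)
  then show ?thesis unfolding rhs .
qed


end
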